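(* Let $\mathcal F_0(\mathbb N)$ be the set of all $f\in l^\infty(\mathbb N)$ with $\mathrm{AE}(f)=0$ and finite range. Then $E_0(\mathbb N)$ is totally disconnected if and only if $\mathcal E_0(\mathbb N)$ equals the norm closure of $\mathcal F_0(\mathbb N)$ in $l^\infty(\mathbb N)$.
   Context: $\mathbb N=\{0,1,2,\ldots\}$ and $l^\infty(\mathbb N)$ is the C*-algebra of bounded complex-valued functions on $\mathbb N$. Let $(\sigma_Af)(n)=f(n+1)$. An anqie is a unital C*-subalgebra $\mathcal A\subseteq l^\infty(\mathbb N)$ with $\sigma_A(\mathcal A)\subseteq\mathcal A$; $\mathcal A_{\{f\}}$ is the smallest anqie containing $f$. For an anqie $\mathcal A$ with maximal ideal space $X$, $A:X\to X$, $(A\rho)(g)=\rho(\sigma_Ag)$, is continuous and the anqie entropy is $\mathrm{AE}(\mathcal A)=h(A)$ (topological entropy); $\mathrm{AE}(f)=\mathrm{AE}(\mathcal A_{\{f\}})$. $\mathcal E_0(\mathbb N)=\{f\in l^\infty(\mathbb N):\mathrm{AE}(f)=0\}$ (an anqie), and $E_0(\mathbb N)$ is its maximal ideal space with the weak* topology. Totally disconnected means any two distinct points are separated by a clopen set. *)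

theory Defs
  imports "HOL-Analysis.Analysis"
begin

type_synonym seq = "nat \<Rightarrow> complex"

definition linf :: "seq set" where
  "linf = {f. bounded (range f)}"

definition sup_norm :: "seq \<Rightarrow> real" where
  "sup_norm f = (SUP n. cmod (f n))"

definition shift :: "seq \<Rightarrow> seq" where
  "shift f = (\<lambda>n. f (Suc n))"

definition is_anqie :: "seq set \<Rightarrow> bool" where
  "is_anqie A \<longleftrightarrow>
     A \<subseteq> linf \<and>
     (\<lambda>_. 1) \<in> A \<and>
     (\<forall>f\<in>A. \<forall>g\<in>A. (\<lambda>n. f n + g n) \<in> A \<and> (\<lambda>n. f n * g n) \<in> A) \<and>
     (\<forall>c. \<forall>f\<in>A. (\<lambda>n. c * f n) \<in> A) \<and>
     (\<forall>f\<in>A. (\<lambda>n. cnj (f n)) \<in> A) \<and>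
     (\<forall>f\<in>linf. (\<forall>e>0. \<exists>g\<in>A. sup_norm (\<lambda>n. f n - g n) < e) \<longrightarrow> f \<in> A) \<and>
     shift ` A \<subseteq> A"

definition anqie_gen :: "seq \<Rightarrow> seq set" where
  "anqie_gen f = \<Inter>{A. is_anqie A \<and> f \<in> A}"

text \<open>Maximal ideal space, realised (Gelfand) as the set of characters (nonzero
  multiplicative linear functionals), extended by 0 outside the algebra.\<close>
definition characters :: "seq set \<Rightarrow> (seq \<Rightarrow> complex) set" where
  "characters A = {\<rho>.
     \<rho> (\<lambda>_. 1) = 1 \<and>
     (\<forall>f\<in>A. \<forall>g\<in>A. \<rho> (\<lambda>n. f n + g n) = \<rho> f + \<rho> g \<and> \<rho> (\<lambda>n. f n * g n) = \<rho> f * \<rho> g) \<and>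
     (\<forall>c. \<forall>f\<in>A. \<rho> (\<lambda>n. c * f n) = c * \<rho> f) \<and>
     (\<forall>g. g \<notin> A \<longrightarrow> \<rho> g = 0)}"

text \<open>Weak* topology: topology of pointwise convergence on the characters.\<close>
definition weakstar :: "seq set \<Rightarrow> (seq \<Rightarrow> complex) topology" where
  "weakstar A = subtopology (product_topology (\<lambda>_. euclidean) UNIV) (characters A)"

definition anqie_map :: "seq set \<Rightarrow> (seq \<Rightarrow> complex) \<Rightarrow> (seq \<Rightarrow> complex)" where
  "anqie_map A \<rho> = (\<lambda>g. if g \<in> A then \<rho> (shift g) else 0)"

definition open_cover :: "'a topology \<Rightarrow> 'a set set \<Rightarrow> bool" where
  "open_cover X \<U> \<longleftrightarrow> (\<forall>U\<in>\<U>. openin X U) \<and> \<Union>\<U> = topspace X"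

definition cover_num :: "'a topology \<Rightarrow> 'a set set \<Rightarrow> nat" where
  "cover_num X \<U> = Inf {card \<V> | \<V>. \<V> \<subseteq> \<U> \<and> finite \<V> \<and> \<Union>\<V> = topspace X}"

definition iter_join :: "'a topology \<Rightarrow> ('a \<Rightarrow> 'a) \<Rightarrow> 'a set set \<Rightarrow> nat \<Rightarrow> 'a set set" where
  "iter_join X T \<U> n =
     {topspace X \<inter> (\<Inter>i<n. (T ^^ i) -` (U i)) | U. \<forall>i<n. U i \<in> \<U>}"

definition cover_entropy :: "'a topology \<Rightarrow> ('a \<Rightarrow> 'a) \<Rightarrow> 'a set set \<Rightarrow> ereal" where
  "cover_entropy X T \<U> =
     limsup (\<lambda>n. ereal (ln (real (cover_num X (iter_join X T \<U> n))) / real n))"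

definition top_entropy :: "'a topology \<Rightarrow> ('a \<Rightarrow> 'a) \<Rightarrow> ereal" where
  "top_entropy X T = (SUP \<U> \<in> {\<U>. open_cover X \<U>}. cover_entropy X T \<U>)"

definition AE_anqie :: "seq set \<Rightarrow> ereal" where
  "AE_anqie A = top_entropy (weakstar A) (anqie_map A)"

definition AE_fun :: "seq \<Rightarrow> ereal" where
  "AE_fun f = AE_anqie (anqie_gen f)"

definition E0 :: "seq set" where
  "E0 = {f \<in> linf. AE_fun f = 0}"

definition F0 :: "seq set" where
  "F0 = {f \<in> linf. AE_fun f = 0 \<and> finite (range f)}"

definition norm_closure :: "seq set \<Rightarrow> seq set" where
  "norm_closure S = {f \<in> linf. \<forall>e>0. \<exists>g\<in>S. sup_norm (\<lambda>n. f n - g n) < e}"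

definition totally_disconnected_top :: "'a topology \<Rightarrow> bool" where
  "totally_disconnected_top X \<longleftrightarrow>
     (\<forall>x\<in>topspace X. \<forall>y\<in>topspace X. x \<noteq> y \<longrightarrow>
        (\<exists>C. openin X C \<and> closedin X C \<and> x \<in> C \<and> y \<notin> C))"

end

theory Submission
  imports Defs
begin


lemma linf_iff: "f \<in> linf \<longleftrightarrow> (\<exists>B. \<forall>n. cmod (f n) \<le> B)"
  unfolding linf_def bounded_iff by auto

lemma sup_norm_ge: "f \<in> linf \<Longrightarrow> cmod (f n) \<le> sup_norm f"
  unfolding sup_norm_def linf_iff
  by (auto intro!: cSUP_upper bdd_aboveI2)

lemma sup_norm_le: "(\<And>n. cmod (f n) \<le> B) \<Longrightarrow> sup_norm f \<le> B"
  unfolding sup_norm_def by (auto intro!: cSUP_least)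

lemma sup_norm_nonneg: "f \<in> linf \<Longrightarrow> 0 \<le> sup_norm f"
  using sup_norm_ge[of f 0] by (meson norm_ge_zero order_trans)

lemma linf_diff: "f \<in> linf \<Longrightarrow> g \<in> linf \<Longrightarrow> (\<lambda>n. f n - g n) \<in> linf"
proof -
  assume "f \<in> linf" "g \<in> linf"
  then obtain B C where B: "\<forall>n. cmod (f n) \<le> B" and C: "\<forall>n. cmod (g n) \<le> C" unfolding linf_iff by auto
  have "cmod (f n - g n) \<le> B + C" for n
    using B[rule_format, of n] C[rule_format, of n] norm_triangle_ineq4[of "f n" "g n"] by linarith
  then show ?thesis unfolding linf_iff by blast
qed

lemma sup_norm_less: "f \<in> linf \<Longrightarrow> g \<in> linf \<Longrightarrow> sup_norm (\<lambda>n. f n - g n) < e \<Longrightarrow> cmod (f n - g n) < e"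
  using sup_norm_ge[OF linf_diff, of f g n] by auto

lemma anqie_linf: "is_anqie A \<Longrightarrow> A \<subseteq> linf" unfolding is_anqie_def by auto
lemma anqie_one: "is_anqie A \<Longrightarrow> (\<lambda>_. 1) \<in> A" unfolding is_anqie_def by auto
lemma anqie_add: "is_anqie A \<Longrightarrow> f \<in> A \<Longrightarrow> g \<in> A \<Longrightarrow> (\<lambda>n. f n + g n) \<in> A"
  unfolding is_anqie_def by auto
lemma anqie_mult: "is_anqie A \<Longrightarrow> f \<in> A \<Longrightarrow> g \<in> A \<Longrightarrow> (\<lambda>n. f n * g n) \<in> A"
  unfolding is_anqie_def by auto
lemma anqie_scal: "is_anqie A \<Longrightarrow> f \<in> A \<Longrightarrow> (\<lambda>n. c * f n) \<in> A"
  unfolding is_anqie_def by auto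
lemma anqie_cnj: "is_anqie A \<Longrightarrow> f \<in> A \<Longrightarrow> (\<lambda>n. cnj (f n)) \<in> A"
  unfolding is_anqie_def by auto
lemma anqie_shift: "is_anqie A \<Longrightarrow> f \<in> A \<Longrightarrow> shift f \<in> A"
  unfolding is_anqie_def by auto
lemma anqie_closed: "is_anqie A \<Longrightarrow> f \<in> linf \<Longrightarrow> (\<And>e. e > 0 \<Longrightarrow> \<exists>g\<in>A. sup_norm (\<lambda>n. f n - g n) < e) \<Longrightarrow> f \<in> A"
  unfolding is_anqie_def by auto

lemma anqie_const: "is_anqie A \<Longrightarrow> (\<lambda>_. c) \<in> A"
  using anqie_scal[OF _ anqie_one, of A c] by simp

lemma anqie_diff: "is_anqie A \<Longrightarrow> f \<in> A \<Longrightarrow> g \<in> A \<Longrightarrow> (\<lambda>n. f n - g n) \<in> A"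
  using anqie_add[of A f "\<lambda>n. (-1) * g n"] anqie_scal[of A g "-1"] by simp

lemma anqie_shift_pow: "is_anqie A \<Longrightarrow> f \<in> A \<Longrightarrow> (shift ^^ i) f \<in> A"
  by (induction i) (auto intro: anqie_shift)

lemma shift_pow_apply: "(shift ^^ i) f n = f (n + i)"
  by (induction i arbitrary: n) (auto simp: shift_def)

lemma anqie_pow: "is_anqie A \<Longrightarrow> f \<in> A \<Longrightarrow> (\<lambda>n. f n ^ k) \<in> A"
proof (induction k)
  case 0 then show ?case by (simp add: anqie_one)
next
  case (Suc k) then show ?case using anqie_mult[of A f "\<lambda>n. f n ^ k"] by simp
qed

lemma anqie_sum: fixes N :: nat shows "is_anqie A \<Longrightarrow> (\<And>k. k < N \<Longrightarrow> (\<lambda>n. F k n) \<in> A) \<Longrightarrow> (\<lambda>n. \<Sum>k<N. F k n) \<in> A"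
proof (induction N)
  case 0 then show ?case using anqie_const[of A 0] by simp
next
  case (Suc N) then show ?case using anqie_add[of A "\<lambda>n. \<Sum>k<N. F k n" "\<lambda>n. F N n"] by simp
qed

lemma linf_anqie: "is_anqie linf"
  unfolding is_anqie_def
proof (intro conjI ballI allI impI)
  show "(\<lambda>_. 1) \<in> linf" unfolding linf_iff by auto
next
  fix f g assume "f \<in> linf" "g \<in> linf"
  then obtain B C where B: "\<forall>n. cmod (f n) \<le> B" and C: "\<forall>n. cmod (g n) \<le> C" unfolding linf_iff by auto
  have "cmod (f n + g n) \<le> B + C" for n
    using B[rule_format, of n] C[rule_format, of n] norm_triangle_ineq[of "f n" "g n"] by linarith
  then show "(\<lambda>n. f n + g n) \<in> linf" unfolding linf_iff by blast
  have "cmod (f n * g n) \<le> B * C" for n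
    unfolding norm_mult using B[rule_format, of n] C[rule_format, of n]
    by (intro mult_mono) (auto intro: order_trans[OF norm_ge_zero])
  then show "(\<lambda>n. f n * g n) \<in> linf" unfolding linf_iff by blast
next
  fix c f assume "f \<in> linf"
  then obtain B where B: "\<forall>n. cmod (f n) \<le> B" unfolding linf_iff by auto
  have "cmod (c * f n) \<le> cmod c * B" for n
    unfolding norm_mult using B[rule_format, of n] by (intro mult_left_mono) auto
  then show "(\<lambda>n. c * f n) \<in> linf" unfolding linf_iff by blast
next
  fix f assume "f \<in> linf" then show "(\<lambda>n. cnj (f n)) \<in> linf" unfolding linf_iff by simp
next
  have "(\<lambda>n. f (Suc n)) \<in> linf" if "f \<in> linf" for f using that unfolding linf_iff by blast
  then show "shift ` linf \<subseteq> linf" unfolding shift_def by auto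
qed auto

lemma anqie_Inter: assumes ne: "\<AA> \<noteq> {}" and an: "\<And>A. A \<in> \<AA> \<Longrightarrow> is_anqie A" shows "is_anqie (\<Inter>\<AA>)"
proof -
  have cl: "f \<in> \<Inter>\<AA>" if f: "f \<in> linf" and ap: "\<forall>e>0. \<exists>g\<in>\<Inter>\<AA>. sup_norm (\<lambda>n. f n - g n) < e" for f
  proof
    fix A assume A: "A \<in> \<AA>"
    show "f \<in> A"
    proof (rule anqie_closed[OF an[OF A] f])
      fix e :: real assume "e > 0"
      then obtain g where "g \<in> \<Inter>\<AA>" "sup_norm (\<lambda>n. f n - g n) < e" using ap by blast
      then show "\<exists>g\<in>A. sup_norm (\<lambda>n. f n - g n) < e" using A by blast
    qed
  qed
  show ?thesis unfolding is_anqie_def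
  proof (intro conjI ballI allI impI)
    show "\<Inter>\<AA> \<subseteq> linf" using ne an anqie_linf by blast
    show "(\<lambda>_. 1) \<in> \<Inter>\<AA>" using an anqie_one by blast
    show "shift ` \<Inter>\<AA> \<subseteq> \<Inter>\<AA>" using an anqie_shift by blast
  next
    fix f g assume "f \<in> \<Inter>\<AA>" "g \<in> \<Inter>\<AA>"
    then show "(\<lambda>n. f n + g n) \<in> \<Inter>\<AA>" "(\<lambda>n. f n * g n) \<in> \<Inter>\<AA>"
      using an anqie_add anqie_mult by blast+
  next
    fix c f assume "f \<in> \<Inter>\<AA>" then show "(\<lambda>n. c * f n) \<in> \<Inter>\<AA>" using an anqie_scal by blast
  next
    fix f assume "f \<in> \<Inter>\<AA>" then show "(\<lambda>n. cnj (f n)) \<in> \<Inter>\<AA>" using an anqie_cnj by blast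
  next
    fix f assume "f \<in> linf" "\<forall>e>0. \<exists>g\<in>\<Inter>\<AA>. sup_norm (\<lambda>n. f n - g n) < e"
    then show "f \<in> \<Inter>\<AA>" by (rule cl)
  qed
qed

lemma anqie_gen: assumes "h \<in> linf"
  shows "is_anqie (anqie_gen h)" "h \<in> anqie_gen h"
    "\<And>A. is_anqie A \<Longrightarrow> h \<in> A \<Longrightarrow> anqie_gen h \<subseteq> A"
  unfolding anqie_gen_def
  using assms linf_anqie by (auto intro!: anqie_Inter)



lemma char_one: "\<rho> \<in> characters E \<Longrightarrow> \<rho> (\<lambda>_. 1) = 1"
  unfolding characters_def by auto
lemma char_add: "\<rho> \<in> characters E \<Longrightarrow> f \<in> E \<Longrightarrow> g \<in> E \<Longrightarrow> \<rho> (\<lambda>n. f n + g n) = \<rho> f + \<rho> g"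
  unfolding characters_def by auto
lemma char_mult: "\<rho> \<in> characters E \<Longrightarrow> f \<in> E \<Longrightarrow> g \<in> E \<Longrightarrow> \<rho> (\<lambda>n. f n * g n) = \<rho> f * \<rho> g"
  unfolding characters_def by auto
lemma char_scal: "\<rho> \<in> characters E \<Longrightarrow> f \<in> E \<Longrightarrow> \<rho> (\<lambda>n. c * f n) = c * \<rho> f"
  unfolding characters_def by auto
lemma char_out: "\<rho> \<in> characters E \<Longrightarrow> g \<notin> E \<Longrightarrow> \<rho> g = 0"
  unfolding characters_def by auto

lemma char_const: "\<rho> \<in> characters E \<Longrightarrow> (\<lambda>_. 1) \<in> E \<Longrightarrow> \<rho> (\<lambda>_. c) = c"
  using char_scal[of \<rho> E "\<lambda>_. 1" c] char_one[of \<rho> E] by simp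

lemma char_diff: "\<rho> \<in> characters E \<Longrightarrow> f \<in> E \<Longrightarrow> g \<in> E \<Longrightarrow> (\<lambda>n. (-1) * g n) \<in> E \<Longrightarrow> \<rho> (\<lambda>n. f n - g n) = \<rho> f - \<rho> g"
  using char_add[of \<rho> E f "\<lambda>n. (-1) * g n"] char_scal[of \<rho> E g "-1"] by simp

lemma char_sub_const: assumes \<rho>: "\<rho> \<in> characters E" and A: "is_anqie A" and AE: "A \<subseteq> E" and g: "g \<in> A"
  shows "\<rho> (\<lambda>n. g n - c) = \<rho> g - c"
proof -
  have c1: "(\<lambda>_. - c) \<in> E" using anqie_const[OF A] AE by auto
  have c2: "\<rho> (\<lambda>_. - c) = - c" using char_const[OF \<rho>] anqie_one[OF A] AE by auto
  have "\<rho> (\<lambda>n. g n + (\<lambda>_. - c) n) = \<rho> g + \<rho> (\<lambda>_. - c)" by (rule char_add[OF \<rho>]) (use g AE c1 in auto)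
  then show ?thesis using c2 unfolding diff_conv_add_uminus by simp
qed

section \<open>Neumann series and inverses\<close>

lemma neumann:
  assumes A: "is_anqie A" and r: "r \<in> A" and d: "0 < d"
    and rv: "\<And>m. Im (r m) = 0 \<and> d \<le> Re (r m) \<and> Re (r m) \<le> R"
  shows "(\<lambda>m. 1 / r m) \<in> A"
proof -
  have R: "0 < R" using rv[of 0] d by auto
  define u where "u = (\<lambda>m. 1 - r m / R)"
  define q where "q = 1 - d / R"
  have dR: "d \<le> R" using rv[of 0] by auto
  have q: "0 \<le> q" "q < 1" using d R dR by (auto simp: q_def field_simps)
  have uA: "u \<in> A" unfolding u_def
    using anqie_diff[OF A anqie_one[OF A] anqie_scal[OF A r, of "1/R"]] by simp
  have rnz: "r m \<noteq> 0" for m using rv[of m] d by auto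
  have rge: "d \<le> cmod (r m)" for m
    using rv[of m] abs_Re_le_cmod[of "r m"] by auto
  have ule: "cmod (u m) \<le> q" for m
  proof -
    have "u m = complex_of_real (1 - Re (r m) / R)" using rv[of m] unfolding u_def
      by (simp add: complex_eq_iff)
    then have "cmod (u m) = \<bar>1 - Re (r m) / R\<bar>" by (simp only: norm_of_real)
    moreover have "0 \<le> 1 - Re (r m) / R" "1 - Re (r m) / R \<le> q"
      using rv[of m] R by (auto simp: q_def field_simps)
    ultimately show ?thesis by simp
  qed
  define s where "s = (\<lambda>N m. (1/R) * (\<Sum>k<N. u m ^ k))"
  have sA: "s N \<in> A" for N unfolding s_def
    by (intro anqie_scal[OF A] anqie_sum[OF A] anqie_pow[OF A uA])
  have err: "1 / r m - s N m = u m ^ N / r m" for N m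
  proof -
    have u1: "u m \<noteq> 1" using rnz[of m] R unfolding u_def by auto
    have R0: "complex_of_real R \<noteq> 0" using R by simp
    have h1: "s N m = (1/R) * ((1 - u m ^ N) / (1 - u m))"
      unfolding s_def using sum_gp_strict[of "u m" N] u1 by simp
    have h2: "1 - u m = r m / R" unfolding u_def by simp
    have sv: "s N m = (1 - u m ^ N) / r m" unfolding h1 h2
      using R0 rnz[of m] by (simp add: field_simps)
    show ?thesis unfolding sv by (simp add: diff_divide_distrib)
  qed
  have errb: "cmod (1 / r m - s N m) \<le> q ^ N / d" for N m
  proof -
    have "cmod (1 / r m - s N m) = cmod (u m) ^ N / cmod (r m)" unfolding err by (simp add: norm_divide norm_power)
    also have "\<dots> \<le> q ^ N / d"
      using ule[of m] rge[of m] d q by (intro frac_le power_mono) auto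
    finally show ?thesis .
  qed
  have linf: "(\<lambda>m. 1 / r m) \<in> linf" unfolding linf_iff
  proof (intro exI allI)
    fix m show "cmod (1 / r m) \<le> 1 / d" using rge[of m] d by (simp add: norm_divide frac_le)
  qed
  show ?thesis
  proof (rule anqie_closed[OF A linf])
    fix e :: real assume e: "e > 0"
    have "(\<lambda>N. q ^ N / d) \<longlonglongrightarrow> 0 / d" using q d by (intro tendsto_divide LIMSEQ_power_zero) auto
    then have "eventually (\<lambda>N. q ^ N / d < e) sequentially" using e by (auto dest!: order_tendstoD(2)[where a = e])
    then obtain N0 where "\<forall>N\<ge>N0. q ^ N / d < e" unfolding eventually_sequentially by blast
    then obtain N where N: "q ^ N / d < e" by blast
    have "sup_norm (\<lambda>m. 1 / r m - s N m) \<le> q ^ N / d" by (rule sup_norm_le[OF errb])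
    then show "\<exists>g\<in>A. sup_norm (\<lambda>n. 1 / r n - g n) < e" using sA[of N] N by force
  qed
qed

lemma anqie_inverse:
  assumes A: "is_anqie A" and b: "b \<in> A" and d: "0 < d" and bd: "\<And>m. d \<le> cmod (b m)"
  shows "\<exists>w\<in>A. \<forall>m. b m * w m = 1"
proof -
  have "b \<in> linf" using anqie_linf[OF A] b by auto
  then obtain B where B: "\<And>m. cmod (b m) \<le> B" unfolding linf_iff by auto
  define r where "r = (\<lambda>m. b m * cnj (b m))"
  have rA: "r \<in> A" unfolding r_def by (intro anqie_mult[OF A b] anqie_cnj[OF A b])
  have rv: "Im (r m) = 0 \<and> d^2 \<le> Re (r m) \<and> Re (r m) \<le> B^2" for m
  proof -
    have "r m = complex_of_real ((cmod (b m))^2)" unfolding r_def complex_norm_square by (rule refl)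
    moreover have "d^2 \<le> (cmod (b m))^2" using bd[of m] d by (intro power_mono) auto
    moreover have "(cmod (b m))^2 \<le> B^2" using B[of m] by (intro power_mono) auto
    ultimately show ?thesis by simp
  qed
  have sA: "(\<lambda>m. 1 / r m) \<in> A" by (rule neumann[OF A rA _ rv]) (use d in auto)
  define w where "w = (\<lambda>m. cnj (b m) * (1 / r m))"
  have "w \<in> A" unfolding w_def by (intro anqie_mult[OF A anqie_cnj[OF A b] sA])
  moreover have "b m * w m = 1" for m
  proof -
    have "b m \<noteq> 0" using bd[of m] d by auto
    then show ?thesis unfolding w_def r_def by (simp add: field_simps)
  qed
  ultimately show ?thesis by blast
qed

lemma char_spec:
  assumes \<rho>: "\<rho> \<in> characters E" and A: "is_anqie A" and AE: "A \<subseteq> E" and g: "g \<in> A"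
    and d: "0 < d" and gd: "\<And>m. d \<le> cmod (g m - c)"
  shows "\<rho> g \<noteq> c"
proof
  assume eq: "\<rho> g = c"
  define b where "b = (\<lambda>m. g m - c)"
  have bA: "b \<in> A" unfolding b_def using anqie_diff[OF A g anqie_const[OF A, of c]] by simp
  obtain w where w: "w \<in> A" "\<And>m. b m * w m = 1" using anqie_inverse[OF A bA d] gd unfolding b_def by blast
  have "(\<lambda>m. b m * w m) = (\<lambda>_. 1)" using w by auto
  then have "\<rho> b * \<rho> w = 1" using char_mult[OF \<rho>, of b w] bA w AE char_one[OF \<rho>] by auto
  moreover have "\<rho> b = 0" unfolding b_def using char_sub_const[OF \<rho> A AE g] eq by simp
  ultimately show False by simp
qed

lemma char_bound:
  assumes \<rho>: "\<rho> \<in> characters E" and A: "is_anqie A" and AE: "A \<subseteq> E" and g: "g \<in> A"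
  shows "cmod (\<rho> g) \<le> sup_norm g"
proof (rule ccontr)
  assume "\<not> ?thesis"
  then have lt: "sup_norm g < cmod (\<rho> g)" by simp
  have gl: "g \<in> linf" using anqie_linf[OF A] g by auto
  have "\<rho> g \<noteq> \<rho> g"
  proof (rule char_spec[OF \<rho> A AE g])
    show "0 < cmod (\<rho> g) - sup_norm g" using lt by simp
    fix m
    have "cmod (\<rho> g) - sup_norm g \<le> cmod (\<rho> g) - cmod (g m)" using sup_norm_ge[OF gl, of m] by simp
    also have "\<dots> \<le> cmod (g m - \<rho> g)" using norm_triangle_ineq3[of "\<rho> g" "g m"] by (simp add: norm_minus_commute)
    finally show "cmod (\<rho> g) - sup_norm g \<le> cmod (g m - \<rho> g)" .
  qed
  then show False by simp
qed

lemma char_real: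
  assumes \<rho>: "\<rho> \<in> characters E" and A: "is_anqie A" and AE: "A \<subseteq> E" and g: "g \<in> A"
    and gr: "\<And>m. Im (g m) = 0"
  shows "Im (\<rho> g) = 0"
proof (rule ccontr)
  assume ne: "Im (\<rho> g) \<noteq> 0"
  have "\<rho> g \<noteq> \<rho> g"
  proof (rule char_spec[OF \<rho> A AE g])
    show "0 < \<bar>Im (\<rho> g)\<bar>" using ne by simp
    fix m
    have "\<bar>Im (g m - \<rho> g)\<bar> \<le> cmod (g m - \<rho> g)" by (rule abs_Im_le_cmod)
    then show "\<bar>Im (\<rho> g)\<bar> \<le> cmod (g m - \<rho> g)" using gr[of m] by simp
  qed
  then show False by simp
qed

lemma char_cnj:
  assumes \<rho>: "\<rho> \<in> characters E" and A: "is_anqie A" and AE: "A \<subseteq> E" and g: "g \<in> A"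
  shows "\<rho> (\<lambda>n. cnj (g n)) = cnj (\<rho> g)"
proof -
  define gc where "gc = (\<lambda>n. cnj (g n))"
  have gc: "gc \<in> A" unfolding gc_def using anqie_cnj[OF A g] .
  define a where "a = (\<lambda>n. (1/2) * (\<lambda>n. g n + gc n) n)"
  define b where "b = (\<lambda>n. (-\<i>/2) * (\<lambda>n. g n + (-1) * gc n) n)"
  have s1: "(\<lambda>n. g n + gc n) \<in> A" using anqie_add[OF A g gc] .
  have s2m: "(\<lambda>n. (-1) * gc n) \<in> A" using anqie_scal[OF A gc] .
  have s2: "(\<lambda>n. g n + (-1) * gc n) \<in> A" using anqie_add[OF A g s2m] .
  have aA: "a \<in> A" unfolding a_def using anqie_scal[OF A s1] .
  have bA: "b \<in> A" unfolding b_def using anqie_scal[OF A s2] .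
  have ar: "Im (a n) = 0" for n unfolding a_def gc_def by simp
  have br: "Im (b n) = 0" for n unfolding b_def gc_def by (simp add: complex_eq_iff)
  have ra0: "\<rho> a = (1/2) * \<rho> (\<lambda>n. g n + gc n)" unfolding a_def
    by (rule char_scal[OF \<rho>]) (use s1 AE in auto)
  have ra1: "\<rho> (\<lambda>n. g n + gc n) = \<rho> g + \<rho> gc" by (rule char_add[OF \<rho>]) (use g gc AE in auto)
  have rb0: "\<rho> b = (-\<i>/2) * \<rho> (\<lambda>n. g n + (-1) * gc n)" unfolding b_def
    by (rule char_scal[OF \<rho>]) (use s2 AE in auto)
  have rb1: "\<rho> (\<lambda>n. g n + (-1) * gc n) = \<rho> g + \<rho> (\<lambda>n. (-1) * gc n)" by (rule char_add[OF \<rho>]) (use g s2m AE in auto)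
  have rb2: "\<rho> (\<lambda>n. (-1) * gc n) = (-1) * \<rho> gc" by (rule char_scal[OF \<rho>]) (use gc AE in auto)
  have ra: "\<rho> a = (1/2) * (\<rho> g + \<rho> gc)" using ra0 ra1 by simp
  have rb: "\<rho> b = (-\<i>/2) * (\<rho> g - \<rho> gc)" using rb0 rb1 rb2 by simp
  have "Im (\<rho> a) = 0" by (rule char_real[OF \<rho> A AE aA ar])
  moreover have "Im (\<rho> b) = 0" by (rule char_real[OF \<rho> A AE bA br])
  ultimately show ?thesis unfolding gc_def[symmetric] using ra rb
    by (simp add: complex_eq_iff algebra_simps)
qed

definition pt :: "seq set \<Rightarrow> nat \<Rightarrow> seq \<Rightarrow> complex" where
  "pt E m = (\<lambda>g. if g \<in> E then g m else 0)"

lemma pt_char: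
  assumes "(\<lambda>_. 1) \<in> E" "\<And>f g. f \<in> E \<Longrightarrow> g \<in> E \<Longrightarrow> (\<lambda>n. f n + g n) \<in> E"
    "\<And>f g. f \<in> E \<Longrightarrow> g \<in> E \<Longrightarrow> (\<lambda>n. f n * g n) \<in> E"
    "\<And>c f. f \<in> E \<Longrightarrow> (\<lambda>n. c * f n) \<in> E"
  shows "pt E m \<in> characters E"
  using assms unfolding characters_def pt_def by auto

lemma pt_char_anqie: "is_anqie A \<Longrightarrow> pt A m \<in> characters A"
  by (rule pt_char) (auto intro: anqie_one anqie_add anqie_mult anqie_scal)

lemma map_char: assumes A: "is_anqie A" and \<rho>: "\<rho> \<in> characters A"
  shows "anqie_map A \<rho> \<in> characters A"
proof -
  have s1: "shift (\<lambda>_. 1) = (\<lambda>_. 1)" by (simp add: shift_def)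
  have sa: "shift (\<lambda>n. f n + g n) = (\<lambda>n. shift f n + shift g n)" for f g by (simp add: shift_def)
  have sm: "shift (\<lambda>n. f n * g n) = (\<lambda>n. shift f n * shift g n)" for f g by (simp add: shift_def)
  have ss: "shift (\<lambda>n. c * f n) = (\<lambda>n. c * shift f n)" for c f by (simp add: shift_def)
  show ?thesis unfolding characters_def
  proof (intro CollectI conjI ballI allI impI)
    show "anqie_map A \<rho> (\<lambda>_. 1) = 1" using anqie_one[OF A] char_one[OF \<rho>] s1 unfolding anqie_map_def by simp
  next
    fix f g assume f: "f \<in> A" and g: "g \<in> A"
    show "anqie_map A \<rho> (\<lambda>n. f n + g n) = anqie_map A \<rho> f + anqie_map A \<rho> g"
      unfolding anqie_map_def using anqie_add[OF A f g] f g
      by (simp add: sa char_add[OF \<rho> anqie_shift[OF A f] anqie_shift[OF A g]])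
    show "anqie_map A \<rho> (\<lambda>n. f n * g n) = anqie_map A \<rho> f * anqie_map A \<rho> g"
      unfolding anqie_map_def using anqie_mult[OF A f g] f g
      by (simp add: sm char_mult[OF \<rho> anqie_shift[OF A f] anqie_shift[OF A g]])
  next
    fix c f assume f: "f \<in> A"
    show "anqie_map A \<rho> (\<lambda>n. c * f n) = c * anqie_map A \<rho> f"
      unfolding anqie_map_def using anqie_scal[OF A f] f
      by (simp add: ss char_scal[OF \<rho> anqie_shift[OF A f]])
  next
    fix g assume "g \<notin> A" then show "anqie_map A \<rho> g = 0" unfolding anqie_map_def by simp
  qed
qed

lemma map_pow_apply: assumes A: "is_anqie A" and g: "g \<in> A"
  shows "(anqie_map A ^^ j) \<sigma> g = \<sigma> ((shift ^^ j) g)"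
  using g
proof (induction j arbitrary: \<sigma> g)
  case 0 then show ?case by simp
next
  case (Suc j)
  have "(anqie_map A ^^ Suc j) \<sigma> g = (anqie_map A ^^ j) (anqie_map A \<sigma>) g"
    by (simp only: funpow_Suc_right comp_def)
  also have "\<dots> = anqie_map A \<sigma> ((shift ^^ j) g)" using Suc by simp
  also have "\<dots> = \<sigma> (shift ((shift ^^ j) g))" unfolding anqie_map_def
    using anqie_shift_pow[OF A Suc.prems] by simp
  finally show ?case by simp
qed

lemma map_pow_char: "is_anqie A \<Longrightarrow> \<rho> \<in> characters A \<Longrightarrow> (anqie_map A ^^ j) \<rho> \<in> characters A"
  by (induction j) (auto intro: map_char)



section \<open>weak* topology\<close>

lemma topspace_weakstar [simp]: "topspace (weakstar E) = characters E"
  unfolding weakstar_def by simp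

lemma continuous_map_cmult [continuous_intros]:
  fixes f :: "'a \<Rightarrow> complex"
  shows "\<lbrakk>continuous_map X euclidean f; continuous_map X euclidean g\<rbrakk> \<Longrightarrow> continuous_map X euclidean (\<lambda>x. f x * g x)"
  by (simp add: continuous_map_atin tendsto_mult)

lemma cont_proj_prod: "continuous_map (product_topology (\<lambda>_. euclidean) UNIV) euclidean (\<lambda>\<rho>::seq \<Rightarrow> complex. \<rho> g)"
  using continuous_map_product_projection[of g UNIV "\<lambda>_. euclidean"] by simp

lemma cont_proj: "continuous_map (weakstar E) euclidean (\<lambda>\<rho>. \<rho> g)"
  unfolding weakstar_def by (rule continuous_map_from_subtopology[OF cont_proj_prod])

lemma closed_zero_set:
  assumes "continuous_map (product_topology (\<lambda>_. euclidean) UNIV) euclidean (F :: (seq \<Rightarrow> complex) \<Rightarrow> complex)"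
  shows "closedin (product_topology (\<lambda>_. euclidean) UNIV) {\<rho>. F \<rho> = 0}"
  using closedin_continuous_map_preimage[OF assms, of "{0}"] by simp

definition hered :: "seq set \<Rightarrow> bool" where
  "hered E \<longleftrightarrow> (\<forall>g\<in>E. \<exists>A. is_anqie A \<and> A \<subseteq> E \<and> g \<in> A)"

lemma hered_anqie: "is_anqie A \<Longrightarrow> hered A"
  unfolding hered_def by blast

lemma characters_closed:
  "closedin (product_topology (\<lambda>_. euclidean) UNIV) (characters E)"
proof -
  let ?P = "product_topology (\<lambda>_::seq. euclidean :: complex topology) UNIV"
  define Z where "Z = (\<lambda>F :: (seq \<Rightarrow> complex) \<Rightarrow> complex. {\<rho>. F \<rho> = 0})"
  define \<K> where "\<K> = {Z (\<lambda>\<rho>. \<rho> (\<lambda>_. 1) - 1)}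
     \<union> {Z (\<lambda>\<rho>. \<rho> (\<lambda>n. f n + g n) - (\<rho> f + \<rho> g)) | f g. f \<in> E \<and> g \<in> E}
     \<union> {Z (\<lambda>\<rho>. \<rho> (\<lambda>n. f n * g n) - \<rho> f * \<rho> g) | f g. f \<in> E \<and> g \<in> E}
     \<union> {Z (\<lambda>\<rho>. \<rho> (\<lambda>n. c * f n) - c * \<rho> f) | c f. f \<in> E}
     \<union> {Z (\<lambda>\<rho>. \<rho> g) | g. g \<notin> E}"
  have eq: "characters E = \<Inter>\<K>"
  proof (intro equalityI subsetI)
    fix x assume "x \<in> characters E" then show "x \<in> \<Inter>\<K>" unfolding characters_def \<K>_def Z_def by auto
  next
    fix x assume x: "x \<in> \<Inter>\<K>"
    have mem: "\<And>Y. Y \<in> \<K> \<Longrightarrow> x \<in> Y" using x by blast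
    show "x \<in> characters E" unfolding characters_def
    proof (intro CollectI conjI ballI allI impI)
      show "x (\<lambda>_. 1) = 1" using mem[of "Z (\<lambda>\<rho>. \<rho> (\<lambda>_. 1) - 1)"] unfolding \<K>_def Z_def by auto
    next
      fix f g assume f: "f \<in> E" and g: "g \<in> E"
      have "Z (\<lambda>\<rho>. \<rho> (\<lambda>n. f n + g n) - (\<rho> f + \<rho> g)) \<in> \<K>" unfolding \<K>_def using f g by blast
      from mem[OF this] show "x (\<lambda>n. f n + g n) = x f + x g" unfolding Z_def by auto
      have "Z (\<lambda>\<rho>. \<rho> (\<lambda>n. f n * g n) - \<rho> f * \<rho> g) \<in> \<K>" unfolding \<K>_def using f g by blast
      from mem[OF this] show "x (\<lambda>n. f n * g n) = x f * x g" unfolding Z_def by auto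
    next
      fix c f assume f: "f \<in> E"
      have "Z (\<lambda>\<rho>. \<rho> (\<lambda>n. c * f n) - c * \<rho> f) \<in> \<K>" unfolding \<K>_def using f by blast
      from mem[OF this] show "x (\<lambda>n. c * f n) = c * x f" unfolding Z_def by auto
    next
      fix g assume g: "g \<notin> E"
      have "Z (\<lambda>\<rho>. \<rho> g) \<in> \<K>" unfolding \<K>_def using g by blast
      from mem[OF this] show "x g = 0" unfolding Z_def by auto
    qed
  qed
  have cz: "closedin ?P (Z F)" if "continuous_map ?P euclidean F" for F
    unfolding Z_def by (rule closed_zero_set[OF that])
  have cl: "closedin ?P K" if "K \<in> \<K>" for K
    using that unfolding \<K>_def
    by (auto intro!: cz continuous_intros cont_proj_prod)
  have ne: "\<K> \<noteq> {}" unfolding \<K>_def by auto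
  show ?thesis unfolding eq using cl ne by auto
qed

lemma compact_chars:
  assumes H: "hered E"
  shows "compact_space (weakstar E)"
proof -
  let ?P = "product_topology (\<lambda>_::seq. euclidean :: complex topology) UNIV"
  define bd where "bd = (\<lambda>g. if g \<in> linf then sup_norm g else 0)"
  define K where "K = PiE UNIV (\<lambda>g. cball (0::complex) (bd g))"
  have "compactin ?P K" unfolding K_def by (subst compactin_PiE) auto
  moreover have "characters E \<subseteq> K"
  proof
    fix \<rho> assume \<rho>: "\<rho> \<in> characters E"
    have "\<rho> g \<in> cball 0 (bd g)" for g
    proof (cases "g \<in> E")
      case True
      then obtain A where A: "is_anqie A" "A \<subseteq> E" "g \<in> A" using H unfolding hered_def by blast
      then have "g \<in> linf" using anqie_linf by blast
      then show ?thesis using char_bound[OF \<rho> A] unfolding bd_def by auto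
    next
      case False
      then show ?thesis using char_out[OF \<rho> False] sup_norm_nonneg unfolding bd_def by auto
    qed
    then show "\<rho> \<in> K" unfolding K_def by auto
  qed
  ultimately have "compactin ?P (characters E)"
    using closed_compactin characters_closed by blast
  then show ?thesis unfolding weakstar_def by (rule compact_space_subtopology)
qed

lemma open_basic:
  assumes "finite F"
  shows "openin (weakstar E) {\<tau> \<in> characters E. \<forall>q\<in>F. cmod (\<tau> q - c q) < r}"
  using assms
proof (induction F rule: finite_induct)
  case empty
  then show ?case using openin_topspace[of "weakstar E"] by simp
next
  case (insert a F)
  have "continuous_map (weakstar E) euclideanreal (\<lambda>\<tau>. cmod (\<tau> a - c a))"
    by (intro continuous_intros cont_proj)
  then have "openin (weakstar E) {\<tau> \<in> topspace (weakstar E). cmod (\<tau> a - c a) \<in> {..<r}}"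
    by (rule openin_continuous_map_preimage) simp
  then have "openin (weakstar E) ({\<tau> \<in> characters E. cmod (\<tau> a - c a) < r} \<inter> {\<tau> \<in> characters E. \<forall>q\<in>F. cmod (\<tau> q - c q) < r})"
    using insert by (intro openin_Int) auto
  moreover have "{\<tau> \<in> characters E. \<forall>q\<in>insert a F. cmod (\<tau> q - c q) < r} =
    {\<tau> \<in> characters E. cmod (\<tau> a - c a) < r} \<inter> {\<tau> \<in> characters E. \<forall>q\<in>F. cmod (\<tau> q - c q) < r}"
    by auto
  ultimately show ?case by simp
qed

lemma open_nbhd:
  assumes U: "openin (weakstar E) U" and \<sigma>: "\<sigma> \<in> U"
  shows "\<exists>F r. finite F \<and> F \<subseteq> E \<and> r > 0 \<and> (\<forall>\<tau>\<in>characters E. (\<forall>q\<in>F. cmod (\<tau> q - \<sigma> q) < r) \<longrightarrow> \<tau> \<in> U)"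
proof -
  let ?P = "product_topology (\<lambda>_::seq. euclidean :: complex topology) UNIV"
  obtain W0 where O: "openin ?P W0" "U = W0 \<inter> characters E"
    using U unfolding weakstar_def openin_subtopology by auto
  have \<sigma>O: "\<sigma> \<in> W0" and \<sigma>c: "\<sigma> \<in> characters E" using O \<sigma> by auto
  obtain V where V: "finite {i. V i \<noteq> UNIV}" "\<And>i. open (V i)" "\<sigma> \<in> PiE UNIV V" "PiE UNIV V \<subseteq> W0"
    using O(1) \<sigma>O unfolding openin_product_topology_alt by auto
  define G where "G = {i. V i \<noteq> UNIV}"
  have "\<forall>i\<in>G. \<exists>r>0. ball (\<sigma> i) r \<subseteq> V i"
  proof
    fix i assume "i \<in> G"
    have "\<sigma> i \<in> V i" using V(3) by (auto simp: PiE_iff)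
    then show "\<exists>r>0. ball (\<sigma> i) r \<subseteq> V i" using V(2)[of i] by (auto simp: open_contains_ball)
  qed
  then obtain rr where rr: "\<And>i. i \<in> G \<Longrightarrow> rr i > 0 \<and> ball (\<sigma> i) (rr i) \<subseteq> V i" by metis
  define r where "r = Min (insert 1 (rr ` G))"
  have fG: "finite G" using V(1) unfolding G_def .
  have r0: "r > 0" unfolding r_def using fG rr by (auto simp: Min_gr_iff)
  have rle: "r \<le> rr i" if "i \<in> G" for i unfolding r_def using fG that by auto
  show ?thesis
  proof (intro exI conjI)
    show "finite (G \<inter> E)" using fG by auto
    show "G \<inter> E \<subseteq> E" by auto
    show "r > 0" by (rule r0)
    show "\<forall>\<tau>\<in>characters E. (\<forall>q\<in>G \<inter> E. cmod (\<tau> q - \<sigma> q) < r) \<longrightarrow> \<tau> \<in> U"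
    proof (intro ballI impI)
      fix \<tau> assume \<tau>: "\<tau> \<in> characters E" and cl: "\<forall>q\<in>G \<inter> E. cmod (\<tau> q - \<sigma> q) < r"
      have "\<tau> i \<in> V i" for i
      proof (cases "i \<in> G")
        case True
        have "cmod (\<tau> i - \<sigma> i) < rr i"
        proof (cases "i \<in> E")
          case True
          with \<open>i \<in> G\<close> cl rle show ?thesis by force
        next
          case False
          then show ?thesis using char_out[OF \<tau> False] char_out[OF \<sigma>c False] rr[OF \<open>i \<in> G\<close>] by simp
        qed
        then have "\<tau> i \<in> ball (\<sigma> i) (rr i)" by (simp add: dist_norm norm_minus_commute)
        then show ?thesis using rr[OF True] by auto
      next
        case False then show ?thesis unfolding G_def by auto
      qed
      then have "\<tau> \<in> PiE UNIV V" by auto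
      then show "\<tau> \<in> U" using V(4) O(2) \<tau> by auto
    qed
  qed
qed

lemma lebesgue:
  assumes cpt: "compact_space (weakstar E)"
    and op: "\<And>U. U \<in> \<U> \<Longrightarrow> openin (weakstar E) U" and cov: "characters E \<subseteq> \<Union>\<U>"
  shows "\<exists>F r. finite F \<and> F \<subseteq> E \<and> r > 0 \<and>
     (\<forall>\<sigma>\<in>characters E. \<exists>U\<in>\<U>. \<forall>\<tau>\<in>characters E. (\<forall>q\<in>F. cmod (\<tau> q - \<sigma> q) < r) \<longrightarrow> \<tau> \<in> U)"
proof -
  define P where "P = (\<lambda>\<sigma> U FF rr. U \<in> \<U> \<and> finite FF \<and> FF \<subseteq> E \<and> rr > (0::real) \<and>
     (\<forall>\<tau>\<in>characters E. (\<forall>q\<in>FF. cmod (\<tau> q - \<sigma> q) < rr) \<longrightarrow> \<tau> \<in> U))"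
  have ex: "\<forall>\<sigma>\<in>characters E. \<exists>t. P \<sigma> (fst t) (fst (snd t)) (snd (snd t))"
  proof
    fix \<sigma> assume "\<sigma> \<in> characters E"
    then obtain U where U: "U \<in> \<U>" "\<sigma> \<in> U" using cov by auto
    obtain FF rr where "finite FF \<and> FF \<subseteq> E \<and> rr > 0 \<and> (\<forall>\<tau>\<in>characters E. (\<forall>q\<in>FF. cmod (\<tau> q - \<sigma> q) < rr) \<longrightarrow> \<tau> \<in> U)"
      using open_nbhd[OF op[OF U(1)] U(2)] by blast
    then have "P \<sigma> U FF rr" unfolding P_def using U by blast
    then show "\<exists>t. P \<sigma> (fst t) (fst (snd t)) (snd (snd t))" by (intro exI[of _ "(U, FF, rr)"]) simp
  qed
  obtain t where t: "\<forall>\<sigma>\<in>characters E. P \<sigma> (fst (t \<sigma>)) (fst (snd (t \<sigma>))) (snd (snd (t \<sigma>)))"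
    using bchoice[OF ex] by blast
  define UU where "UU = (\<lambda>\<sigma>. fst (t \<sigma>))"
  define FF where "FF = (\<lambda>\<sigma>. fst (snd (t \<sigma>)))"
  define rr where "rr = (\<lambda>\<sigma>. snd (snd (t \<sigma>)))"
  have ch: "UU \<sigma> \<in> \<U> \<and> finite (FF \<sigma>) \<and> FF \<sigma> \<subseteq> E \<and> rr \<sigma> > 0 \<and>
     (\<forall>\<tau>\<in>characters E. (\<forall>q\<in>FF \<sigma>. cmod (\<tau> q - \<sigma> q) < rr \<sigma>) \<longrightarrow> \<tau> \<in> UU \<sigma>)"
    if "\<sigma> \<in> characters E" for \<sigma>
    using t that unfolding P_def UU_def FF_def rr_def by blast
  define N where "N = (\<lambda>\<sigma>. {\<tau> \<in> characters E. \<forall>q\<in>FF \<sigma>. cmod (\<tau> q - \<sigma> q) < rr \<sigma> / 2})"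
  have Nop: "openin (weakstar E) (N \<sigma>)" if "\<sigma> \<in> characters E" for \<sigma>
    unfolding N_def using ch[OF that] by (intro open_basic) auto
  have Nin: "\<sigma> \<in> N \<sigma>" if "\<sigma> \<in> characters E" for \<sigma>
    unfolding N_def using ch[OF that] that by auto
  have "\<forall>U \<in> N ` characters E. openin (weakstar E) U" using Nop by auto
  moreover have "topspace (weakstar E) \<subseteq> \<Union>(N ` characters E)" using Nin by auto
  ultimately obtain \<FF> where \<FF>: "finite \<FF>" "\<FF> \<subseteq> N ` characters E" "characters E \<subseteq> \<Union>\<FF>"
    using cpt unfolding compact_space_alt by (metis topspace_weakstar)
  then obtain S where S: "finite S" "S \<subseteq> characters E" "\<FF> = N ` S"
    by (meson finite_subset_image)
  define F where "F = \<Union>(FF ` S)"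
  define r where "r = Min (insert 1 ((\<lambda>\<sigma>. rr \<sigma> / 2) ` S))"
  have r0: "r > 0" unfolding r_def using S ch by (auto simp: Min_gr_iff)
  have rle: "r \<le> rr \<sigma> / 2" if "\<sigma> \<in> S" for \<sigma> unfolding r_def using S that by (intro Min_le) auto
  show ?thesis
  proof (intro exI conjI)
    show "finite F" unfolding F_def using S ch by auto
    show "F \<subseteq> E" unfolding F_def using S ch by auto
    show "r > 0" by (rule r0)
    show "\<forall>\<sigma>\<in>characters E. \<exists>U\<in>\<U>. \<forall>\<tau>\<in>characters E. (\<forall>q\<in>F. cmod (\<tau> q - \<sigma> q) < r) \<longrightarrow> \<tau> \<in> U"
    proof
      fix \<sigma> assume \<sigma>: "\<sigma> \<in> characters E"
      then obtain \<sigma>0 where \<sigma>0: "\<sigma>0 \<in> S" "\<sigma> \<in> N \<sigma>0" using \<FF> S by auto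
      have c0: "\<sigma>0 \<in> characters E" using \<sigma>0 S by auto
      show "\<exists>U\<in>\<U>. \<forall>\<tau>\<in>characters E. (\<forall>q\<in>F. cmod (\<tau> q - \<sigma> q) < r) \<longrightarrow> \<tau> \<in> U"
      proof (intro bexI ballI impI)
        show "UU \<sigma>0 \<in> \<U>" using ch[OF c0] by auto
        fix \<tau> assume \<tau>: "\<tau> \<in> characters E" and cl: "\<forall>q\<in>F. cmod (\<tau> q - \<sigma> q) < r"
        have "cmod (\<tau> q - \<sigma>0 q) < rr \<sigma>0" if q: "q \<in> FF \<sigma>0" for q
        proof -
          have "cmod (\<tau> q - \<sigma> q) < rr \<sigma>0 / 2" using cl q \<sigma>0(1) rle[OF \<sigma>0(1)] unfolding F_def by force
          moreover have "cmod (\<sigma> q - \<sigma>0 q) < rr \<sigma>0 / 2" using \<sigma>0(2) q unfolding N_def by auto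
          ultimately show ?thesis using norm_triangle_ineq[of "\<tau> q - \<sigma> q" "\<sigma> q - \<sigma>0 q"] by simp
        qed
        then show "\<tau> \<in> UU \<sigma>0" using ch[OF c0] \<tau> by auto
      qed
    qed
  qed
qed



lemma cover_num_le:
  assumes "V \<subseteq> J" "finite V" "\<Union>V = topspace X"
  shows "cover_num X J \<le> card V"
  unfolding cover_num_def Inf_nat_def using assms by (intro Least_le) blast

lemma cover_num_attained:
  assumes "\<exists>V. V \<subseteq> J \<and> finite V \<and> \<Union>V = topspace X"
  shows "\<exists>V. V \<subseteq> J \<and> finite V \<and> \<Union>V = topspace X \<and> card V = cover_num X J"
proof -
  let ?S = "{card V | V. V \<subseteq> J \<and> finite V \<and> \<Union>V = topspace X}"
  have "?S \<noteq> {}" using assms by blast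
  then have "Inf ?S \<in> ?S" by (rule Inf_nat_def1)
  then obtain V where V: "Inf ?S = card V" "V \<subseteq> J" "finite V" "\<Union>V = topspace X" by blast
  have "card V = cover_num X J" unfolding cover_num_def using V(1) by simp
  then show ?thesis using V by blast
qed

lemma iter_join_mem:
  "W \<in> iter_join X T \<U> n \<longleftrightarrow> (\<exists>U. W = topspace X \<inter> (\<Inter>i<n. (T ^^ i) -` (U i)) \<and> (\<forall>i<n. U i \<in> \<U>))"
  unfolding iter_join_def by auto

lemma iter_join_finite_cover:
  assumes cpt: "compact_space X" and op: "\<And>U. U \<in> \<U> \<Longrightarrow> openin X U" and cov: "topspace X \<subseteq> \<Union>\<U>"
    and inv: "\<And>x i. x \<in> topspace X \<Longrightarrow> (T ^^ i) x \<in> topspace X"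
  shows "\<exists>V. V \<subseteq> iter_join X T \<U> n \<and> finite V \<and> \<Union>V = topspace X"
proof -
  obtain \<U>0 where U0: "finite \<U>0" "\<U>0 \<subseteq> \<U>" "topspace X \<subseteq> \<Union>\<U>0"
    using cpt op cov unfolding compact_space_alt by metis
  define f where "f = (\<lambda>U. topspace X \<inter> (\<Inter>i<n. (T ^^ i) -` (U i)))"
  define J0 where "J0 = f ` (PiE {..<n} (\<lambda>_. \<U>0))"
  have "finite J0" unfolding J0_def using U0(1) by (intro finite_imageI finite_PiE) auto
  moreover have "J0 \<subseteq> iter_join X T \<U> n"
  proof
    fix W assume "W \<in> J0"
    then obtain U where "U \<in> PiE {..<n} (\<lambda>_. \<U>0)" "W = f U" unfolding J0_def by auto
    then show "W \<in> iter_join X T \<U> n" unfolding iter_join_mem f_def using U0(2) by (auto simp: PiE_iff)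
  qed
  moreover have "\<Union>J0 = topspace X"
  proof (intro equalityI subsetI)
    fix x assume "x \<in> \<Union>J0" then show "x \<in> topspace X" unfolding J0_def f_def by auto
  next
    fix x assume x: "x \<in> topspace X"
    have "\<forall>i. \<exists>U. i < n \<longrightarrow> U \<in> \<U>0 \<and> (T ^^ i) x \<in> U" using inv[OF x] U0(3) by blast
    then obtain U where U: "\<And>i. i < n \<Longrightarrow> U i \<in> \<U>0 \<and> (T ^^ i) x \<in> U i" by metis
    have "restrict U {..<n} \<in> PiE {..<n} (\<lambda>_. \<U>0)" using U by auto
    moreover have "x \<in> f (restrict U {..<n})" unfolding f_def using U x by auto
    ultimately show "x \<in> \<Union>J0" unfolding J0_def by blast
  qed
  ultimately show ?thesis by blast
qed

lemma ln_card_nonneg: "0 \<le> ln (real (N::nat))"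
  by (cases "N = 0") auto

lemma cover_entropy_nonneg: "0 \<le> cover_entropy X T \<U>"
  unfolding cover_entropy_def
  by (intro le_Limsup always_eventually allI) (simp_all add: divide_nonneg_nonneg ln_card_nonneg)

lemma top_entropy_nonneg: "0 \<le> top_entropy X T"
proof -
  have "open_cover X {topspace X}" unfolding open_cover_def by auto
  then show ?thesis unfolding top_entropy_def
    by (intro SUP_upper2[of "{topspace X}"] cover_entropy_nonneg) auto
qed

lemma cover_entropy_le_top: "open_cover X \<U> \<Longrightarrow> cover_entropy X T \<U> \<le> top_entropy X T"
  unfolding top_entropy_def by (intro SUP_upper) auto

section \<open>subexponential window complexity\<close>

definition subexp :: "seq \<Rightarrow> bool" where
  "subexp h \<longleftrightarrow> (\<forall>\<epsilon>>0. \<forall>a>0. eventually (\<lambda>n. \<exists>C. finite C \<and> real (card C) \<le> exp (a * real n) \<and>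
       (\<forall>m. \<exists>c\<in>C. \<forall>i<n. cmod (h (m + i) - c i) \<le> \<epsilon>)) sequentially)"

lemma subexp_from_entropy:
  assumes A: "is_anqie A" and ent: "AE_anqie A \<le> 0" and k: "k \<in> A"
  shows "subexp k"
  unfolding subexp_def
proof (intro allI impI)
  fix \<epsilon> a :: real assume \<epsilon>: "\<epsilon> > 0" and a: "a > 0"
  let ?X = "weakstar A" and ?T = "anqie_map A"
  define Uc where "Uc = (\<lambda>c. {\<sigma> \<in> characters A. cmod (\<sigma> k - c) < \<epsilon>})"
  define \<U> where "\<U> = range Uc"
  have opU: "openin ?X U" if "U \<in> \<U>" for U
  proof -
    from that obtain c where "U = Uc c" unfolding \<U>_def by (rule rangeE)
    moreover have "openin ?X {\<tau> \<in> characters A. \<forall>q\<in>{k}. cmod (\<tau> q - (\<lambda>_. c) q) < \<epsilon>}"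
      by (rule open_basic) simp
    ultimately show ?thesis unfolding Uc_def by simp
  qed
  have covU: "\<Union>\<U> = topspace ?X"
  proof (intro equalityI subsetI)
    fix x assume "x \<in> \<Union>\<U>" then show "x \<in> topspace ?X" unfolding \<U>_def Uc_def by auto
  next
    fix x assume "x \<in> topspace ?X"
    then have "x \<in> Uc (x k)" unfolding Uc_def using \<epsilon> by auto
    then show "x \<in> \<Union>\<U>" unfolding \<U>_def by auto
  qed
  have oc: "open_cover ?X \<U>" unfolding open_cover_def using opU covU by auto
  have "cover_entropy ?X ?T \<U> \<le> 0"
    using cover_entropy_le_top[OF oc, of ?T] ent unfolding AE_anqie_def by simp
  then have "Limsup sequentially (\<lambda>n. ereal (ln (real (cover_num ?X (iter_join ?X ?T \<U> n))) / real n)) < ereal a"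
    unfolding cover_entropy_def using a by (simp add: le_less_trans)
  then have ev: "eventually (\<lambda>n. ereal (ln (real (cover_num ?X (iter_join ?X ?T \<U> n))) / real n) < ereal a) sequentially"
    by (rule Limsup_lessD)
  have cpt: "compact_space ?X" by (rule compact_chars[OF hered_anqie[OF A]])
  have inv: "(?T ^^ i) x \<in> topspace ?X" if "x \<in> topspace ?X" for x i
    using map_pow_char[OF A] that by simp
  show "eventually (\<lambda>n. \<exists>C. finite C \<and> real (card C) \<le> exp (a * real n) \<and>
       (\<forall>m. \<exists>c\<in>C. \<forall>i<n. cmod (k (m + i) - c i) \<le> \<epsilon>)) sequentially"
    using ev eventually_ge_at_top[of 1]
  proof eventually_elim
    case (elim n)
    define N where "N = cover_num ?X (iter_join ?X ?T \<U> n)"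
    have n1: "real n \<ge> 1" using elim by simp
    have "ln (real N) / real n < a" using elim(1) unfolding N_def by simp
    then have lnN: "ln (real N) < a * real n" using n1 by (simp add: divide_less_eq mult.commute)
    have Nb: "real N \<le> exp (a * real n)"
    proof (cases "N = 0")
      case True then show ?thesis by simp
    next
      case False
      then have "real N = exp (ln (real N))" by simp
      also have "\<dots> \<le> exp (a * real n)" using lnN by simp
      finally show ?thesis .
    qed
    have ex: "\<exists>V. V \<subseteq> iter_join ?X ?T \<U> n \<and> finite V \<and> \<Union>V = topspace ?X"
      by (rule iter_join_finite_cover[OF cpt opU _ inv]) (use covU in auto)
    from cover_num_attained[OF ex] obtain V where V: "V \<subseteq> iter_join ?X ?T \<U> n" "finite V" "\<Union>V = topspace ?X" "card V = N"
      unfolding N_def by blast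
    have exc: "\<forall>W\<in>V. \<exists>c. W = topspace ?X \<inter> (\<Inter>i<n. (?T ^^ i) -` (Uc (c i)))"
    proof
      fix W assume "W \<in> V"
      then have "W \<in> iter_join ?X ?T \<U> n" using V(1) by blast
      then obtain U where U: "W = topspace ?X \<inter> (\<Inter>i<n. (?T ^^ i) -` (U i))" "\<forall>i<n. U i \<in> \<U>"
        unfolding iter_join_mem by blast
      have "\<forall>i. \<exists>c. i < n \<longrightarrow> U i = Uc c" using U(2) unfolding \<U>_def by blast
      then obtain c where c0: "\<forall>i. i < n \<longrightarrow> U i = Uc (c i)" by (rule choice[THEN exE])
      then have c: "\<And>i. i < n \<Longrightarrow> U i = Uc (c i)" by blast
      have "(\<Inter>i<n. (?T ^^ i) -` (U i)) = (\<Inter>i<n. (?T ^^ i) -` (Uc (c i)))"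
        by (rule INF_cong) (simp_all add: c)
      then have "W = topspace ?X \<inter> (\<Inter>i<n. (?T ^^ i) -` (Uc (c i)))" unfolding U(1) by simp
      then show "\<exists>c. W = topspace ?X \<inter> (\<Inter>i<n. (?T ^^ i) -` (Uc (c i)))" by (intro exI[of _ c])
    qed
    obtain cw where cw0: "\<forall>W\<in>V. W = topspace ?X \<inter> (\<Inter>i<n. (?T ^^ i) -` (Uc (cw W i)))"
      by (rule exE[OF bchoice[OF exc]])
    have cw: "\<And>W. W \<in> V \<Longrightarrow> W = topspace ?X \<inter> (\<Inter>i<n. (?T ^^ i) -` (Uc (cw W i)))"
      using cw0 by blast
    define C where "C = cw ` V"
    show ?case
    proof (intro exI conjI allI)
      show "finite C" unfolding C_def using V(2) by auto
      have "card C \<le> card V" unfolding C_def using V(2) by (rule card_image_le)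
      then show "real (card C) \<le> exp (a * real n)" using Nb V(4) by linarith
    next
      fix m
      have "pt A m \<in> topspace ?X" using pt_char_anqie[OF A] by simp
      then obtain W where W: "W \<in> V" "pt A m \<in> W" using V(3) by blast
      have "cmod (k (m + i) - cw W i) \<le> \<epsilon>" if i: "i < n" for i
      proof -
        have "(?T ^^ i) (pt A m) \<in> Uc (cw W i)" using cw[OF W(1)] W(2) i by auto
        then have "cmod ((?T ^^ i) (pt A m) k - cw W i) < \<epsilon>" unfolding Uc_def by auto
        moreover have "(?T ^^ i) (pt A m) k = k (m + i)"
          using map_pow_apply[OF A k] anqie_shift_pow[OF A k] unfolding pt_def
          by (simp add: shift_pow_apply)
        ultimately show ?thesis by simp
      qed
      then show "\<exists>c\<in>C. \<forall>i<n. cmod (k (m + i) - c i) \<le> \<epsilon>" unfolding C_def using W(1) by blast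
    qed
  qed
qed



lemma char_sum:
  fixes N :: nat
  assumes \<rho>: "\<rho> \<in> characters E" and A: "is_anqie A" and AE: "A \<subseteq> E"
    and F: "\<And>k. k < N \<Longrightarrow> (\<lambda>n. F k n) \<in> A"
  shows "\<rho> (\<lambda>n. \<Sum>k<N. F k n) = (\<Sum>k<N. \<rho> (\<lambda>n. F k n))"
  using F
proof (induction N)
  case 0
  then show ?case using char_const[OF \<rho>, of 0] anqie_one[OF A] AE by auto
next
  case (Suc N)
  have s: "(\<lambda>n. \<Sum>k<N. F k n) \<in> A" using anqie_sum[OF A] Suc.prems by simp
  have "\<rho> (\<lambda>n. (\<lambda>n. \<Sum>k<N. F k n) n + (\<lambda>n. F N n) n) = \<rho> (\<lambda>n. \<Sum>k<N. F k n) + \<rho> (\<lambda>n. F N n)"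
    by (rule char_add[OF \<rho>]) (use s Suc.prems AE in auto)
  then show ?case using Suc by simp
qed

lemma char_minus:
  assumes \<rho>: "\<rho> \<in> characters E" and A: "is_anqie A" and AE: "A \<subseteq> E" and f: "f \<in> A" and g: "g \<in> A"
  shows "\<rho> (\<lambda>n. f n - g n) = \<rho> f - \<rho> g"
proof -
  have m: "(\<lambda>n. (-1) * g n) \<in> E" using anqie_scal[OF A g, of "-1"] AE by blast
  show ?thesis by (rule char_diff[OF \<rho> _ _ m]) (use f g AE in auto)
qed

lemma density:
  fixes N :: nat
  assumes A: "is_anqie A" and \<tau>: "\<tau> \<in> characters A" and Q: "\<And>i. i < N \<Longrightarrow> Q i \<in> A" and d: "d > 0"
  shows "\<exists>m. \<forall>i<N. cmod (Q i m - \<tau> (Q i)) < d"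
proof (rule ccontr)
  assume "\<not> ?thesis"
  then have viol: "\<forall>m. \<exists>i<N. d \<le> cmod (Q i m - \<tau> (Q i))" by (auto simp: not_less)
  define D where "D = (\<lambda>i m. Q i m - \<tau> (Q i))"
  have DA: "(\<lambda>m. D i m) \<in> A" if "i < N" for i
    unfolding D_def using anqie_diff[OF A Q[OF that] anqie_const[OF A, of "\<tau> (Q i)"]] by simp
  have tA: "(\<lambda>m. D i m * cnj (D i m)) \<in> A" if "i < N" for i
    using anqie_mult[OF A DA[OF that] anqie_cnj[OF A DA[OF that]]] by simp
  define b where "b = (\<lambda>m. \<Sum>i<N. D i m * cnj (D i m))"
  have bA: "b \<in> A" unfolding b_def by (rule anqie_sum[OF A tA])
  have tD: "\<tau> (\<lambda>m. D i m) = 0" if "i < N" for i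
    unfolding D_def using char_sub_const[OF \<tau> A _ Q[OF that]] by simp
  have "\<tau> b = (\<Sum>i<N. \<tau> (\<lambda>m. D i m * cnj (D i m)))"
    unfolding b_def by (rule char_sum[OF \<tau> A _ tA]) auto
  also have "\<dots> = 0"
  proof (rule sum.neutral, intro ballI)
    fix i assume "i \<in> {..<N}"
    then have i: "i < N" by simp
    have "\<tau> (\<lambda>m. D i m * cnj (D i m)) = \<tau> (\<lambda>m. D i m) * \<tau> (\<lambda>m. cnj (D i m))"
      by (rule char_mult[OF \<tau>]) (use DA[OF i] anqie_cnj[OF A DA[OF i]] in auto)
    then show "\<tau> (\<lambda>m. D i m * cnj (D i m)) = 0" using tD[OF i] by simp
  qed
  finally have tb: "\<tau> b = 0" .
  have "\<tau> b \<noteq> 0"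
  proof (rule char_spec[OF \<tau> A _ bA])
    show "0 < d^2" using d by simp
    fix m
    obtain i where i: "i < N" "d \<le> cmod (D i m)" using viol unfolding D_def by blast
    have bm: "b m = complex_of_real (\<Sum>i<N. (cmod (D i m))^2)"
      unfolding b_def of_real_sum complex_norm_square by simp
    have "d^2 \<le> (cmod (D i m))^2" using i d by (intro power_mono) auto
    also have "\<dots> \<le> (\<Sum>i<N. (cmod (D i m))^2)"
      using i by (intro member_le_sum) auto
    also have "\<dots> = cmod (b m - 0)"
    proof -
      have "cmod (b m - 0) = \<bar>\<Sum>i<N. (cmod (D i m))^2\<bar>" unfolding bm diff_zero by (rule norm_of_real)
      then show ?thesis by (simp add: sum_nonneg)
    qed
    finally show "d^2 \<le> cmod (b m - 0)" .
  qed simp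
  then show False using tb by simp
qed

definition cgood :: "seq \<Rightarrow> seq set \<Rightarrow> seq \<Rightarrow> bool" where
  "cgood h A q \<longleftrightarrow> (\<forall>\<epsilon>>0. \<exists>L \<eta>. \<eta> > 0 \<and> (\<forall>\<sigma>\<in>characters A. \<forall>\<tau>\<in>characters A.
     (\<forall>i<L. cmod (\<sigma> ((shift ^^ i) h) - \<tau> ((shift ^^ i) h)) < \<eta>) \<longrightarrow> cmod (\<sigma> q - \<tau> q) < \<epsilon>))"

lemma cgoodI2:
  assumes "\<And>\<epsilon>. \<epsilon> > 0 \<Longrightarrow> \<exists>L \<eta>. \<eta> > 0 \<and> (\<forall>\<sigma>\<in>characters A. \<forall>\<tau>\<in>characters A.
     (\<forall>i<L. cmod (\<sigma> ((shift ^^ i) h) - \<tau> ((shift ^^ i) h)) < \<eta>) \<longrightarrow> cmod (\<sigma> q - \<tau> q) < \<epsilon>)"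
  shows "cgood h A q"
  using assms unfolding cgood_def by blast

lemma cgood_two:
  assumes "cgood h A f" "cgood h A g" "e1 > 0" "e2 > 0"
  shows "\<exists>L \<eta>. \<eta> > 0 \<and> (\<forall>\<sigma>\<in>characters A. \<forall>\<tau>\<in>characters A.
     (\<forall>i<L. cmod (\<sigma> ((shift ^^ i) h) - \<tau> ((shift ^^ i) h)) < \<eta>) \<longrightarrow>
        cmod (\<sigma> f - \<tau> f) < e1 \<and> cmod (\<sigma> g - \<tau> g) < e2)"
proof -
  obtain L1 \<eta>1 where 1: "\<eta>1 > 0" "\<forall>\<sigma>\<in>characters A. \<forall>\<tau>\<in>characters A.
     (\<forall>i<L1. cmod (\<sigma> ((shift ^^ i) h) - \<tau> ((shift ^^ i) h)) < \<eta>1) \<longrightarrow> cmod (\<sigma> f - \<tau> f) < e1"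
    using assms(1,3) unfolding cgood_def by blast
  obtain L2 \<eta>2 where 2: "\<eta>2 > 0" "\<forall>\<sigma>\<in>characters A. \<forall>\<tau>\<in>characters A.
     (\<forall>i<L2. cmod (\<sigma> ((shift ^^ i) h) - \<tau> ((shift ^^ i) h)) < \<eta>2) \<longrightarrow> cmod (\<sigma> g - \<tau> g) < e2"
    using assms(2,4) unfolding cgood_def by blast
  show ?thesis
    by (rule exI[of _ "max L1 L2"], rule exI[of _ "min \<eta>1 \<eta>2"]) (use 1 2 in auto)
qed

lemma coord:
  assumes hl: "h \<in> linf" and q: "q \<in> anqie_gen h"
  shows "cgood h (anqie_gen h) q"
proof -
  let ?A = "anqie_gen h"
  have A: "is_anqie ?A" and hA: "h \<in> ?A" using anqie_gen[OF hl] by auto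
  define M where "M = {q \<in> ?A. cgood h ?A q}"
  have MA: "M \<subseteq> ?A" unfolding M_def by auto
  have "is_anqie M" unfolding is_anqie_def
  proof (intro conjI ballI allI impI)
    show "M \<subseteq> linf" using MA anqie_linf[OF A] by auto
    show "(\<lambda>_. 1) \<in> M" unfolding M_def
    proof (intro CollectI conjI cgoodI2 anqie_one[OF A])
      fix \<epsilon> :: real assume \<epsilon>: "\<epsilon> > 0"
      show "\<exists>L \<eta>. \<eta> > 0 \<and> (\<forall>\<sigma>\<in>characters ?A. \<forall>\<tau>\<in>characters ?A.
          (\<forall>i<L. cmod (\<sigma> ((shift ^^ i) h) - \<tau> ((shift ^^ i) h)) < \<eta>) \<longrightarrow> cmod (\<sigma> (\<lambda>_. 1) - \<tau> (\<lambda>_. 1)) < \<epsilon>)"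
        by (rule exI[of _ 0], rule exI[of _ 1]) (use \<epsilon> in \<open>auto simp: char_one\<close>)
    qed
  next
    fix f g assume f: "f \<in> M" and g: "g \<in> M"
    have fA: "f \<in> ?A" and gA: "g \<in> ?A" and cf: "cgood h ?A f" and cg: "cgood h ?A g" using f g unfolding M_def by auto
    show "(\<lambda>n. f n + g n) \<in> M" unfolding M_def
    proof (intro CollectI conjI cgoodI2)
      show "(\<lambda>n. f n + g n) \<in> ?A" by (rule anqie_add[OF A fA gA])
      fix \<epsilon> :: real assume \<epsilon>: "\<epsilon> > 0"
      obtain L \<eta> where L: "\<eta> > 0" "\<forall>\<sigma>\<in>characters ?A. \<forall>\<tau>\<in>characters ?A.
        (\<forall>i<L. cmod (\<sigma> ((shift ^^ i) h) - \<tau> ((shift ^^ i) h)) < \<eta>) \<longrightarrow>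
        cmod (\<sigma> f - \<tau> f) < \<epsilon>/2 \<and> cmod (\<sigma> g - \<tau> g) < \<epsilon>/2"
        using cgood_two[OF cf cg, of "\<epsilon>/2" "\<epsilon>/2"] \<epsilon> by auto
      show "\<exists>L \<eta>. \<eta> > 0 \<and> (\<forall>\<sigma>\<in>characters ?A. \<forall>\<tau>\<in>characters ?A.
        (\<forall>i<L. cmod (\<sigma> ((shift ^^ i) h) - \<tau> ((shift ^^ i) h)) < \<eta>) \<longrightarrow>
        cmod (\<sigma> (\<lambda>n. f n + g n) - \<tau> (\<lambda>n. f n + g n)) < \<epsilon>)"
      proof (intro exI conjI ballI impI)
        show "\<eta> > 0" by (rule L(1))
        fix \<sigma> \<tau> assume \<sigma>: "\<sigma> \<in> characters ?A" and \<tau>: "\<tau> \<in> characters ?A"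
          and cl: "\<forall>i<L. cmod (\<sigma> ((shift ^^ i) h) - \<tau> ((shift ^^ i) h)) < \<eta>"
        have "cmod (\<sigma> (\<lambda>n. f n + g n) - \<tau> (\<lambda>n. f n + g n)) = cmod ((\<sigma> f - \<tau> f) + (\<sigma> g - \<tau> g))"
          using char_add[OF \<sigma> fA gA] char_add[OF \<tau> fA gA] by (simp add: algebra_simps)
        also have "\<dots> \<le> cmod (\<sigma> f - \<tau> f) + cmod (\<sigma> g - \<tau> g)" by (rule norm_triangle_ineq)
        also have "\<dots> < \<epsilon>" using L(2) \<sigma> \<tau> cl by fastforce
        finally show "cmod (\<sigma> (\<lambda>n. f n + g n) - \<tau> (\<lambda>n. f n + g n)) < \<epsilon>" .
      qed
    qed
    show "(\<lambda>n. f n * g n) \<in> M" unfolding M_def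
    proof (intro CollectI conjI cgoodI2)
      show "(\<lambda>n. f n * g n) \<in> ?A" by (rule anqie_mult[OF A fA gA])
      fix \<epsilon> :: real assume \<epsilon>: "\<epsilon> > 0"
      define Bf where "Bf = sup_norm f"
      define Bg where "Bg = sup_norm g"
      have Bf0: "Bf \<ge> 0" unfolding Bf_def using sup_norm_nonneg fA anqie_linf[OF A] by auto
      have Bg0: "Bg \<ge> 0" unfolding Bg_def using sup_norm_nonneg gA anqie_linf[OF A] by auto
      define e where "e = \<epsilon> / (2 * (Bf + Bg + 1))"
      have e0: "e > 0" unfolding e_def using \<epsilon> Bf0 Bg0 by simp
      obtain L \<eta> where L: "\<eta> > 0" "\<forall>\<sigma>\<in>characters ?A. \<forall>\<tau>\<in>characters ?A.
        (\<forall>i<L. cmod (\<sigma> ((shift ^^ i) h) - \<tau> ((shift ^^ i) h)) < \<eta>) \<longrightarrow>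
        cmod (\<sigma> f - \<tau> f) < e \<and> cmod (\<sigma> g - \<tau> g) < e"
        using cgood_two[OF cf cg e0 e0] by auto
      show "\<exists>L \<eta>. \<eta> > 0 \<and> (\<forall>\<sigma>\<in>characters ?A. \<forall>\<tau>\<in>characters ?A.
        (\<forall>i<L. cmod (\<sigma> ((shift ^^ i) h) - \<tau> ((shift ^^ i) h)) < \<eta>) \<longrightarrow>
        cmod (\<sigma> (\<lambda>n. f n * g n) - \<tau> (\<lambda>n. f n * g n)) < \<epsilon>)"
      proof (intro exI conjI ballI impI)
        show "\<eta> > 0" by (rule L(1))
        fix \<sigma> \<tau> assume \<sigma>: "\<sigma> \<in> characters ?A" and \<tau>: "\<tau> \<in> characters ?A"
          and cl: "\<forall>i<L. cmod (\<sigma> ((shift ^^ i) h) - \<tau> ((shift ^^ i) h)) < \<eta>"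
        have d1: "cmod (\<sigma> f - \<tau> f) < e" and d2: "cmod (\<sigma> g - \<tau> g) < e" using L(2) \<sigma> \<tau> cl by auto
        have b1: "cmod (\<sigma> f) \<le> Bf" unfolding Bf_def by (rule char_bound[OF \<sigma> A _ fA]) simp
        have b2: "cmod (\<tau> g) \<le> Bg" unfolding Bg_def by (rule char_bound[OF \<tau> A _ gA]) simp
        have "\<sigma> (\<lambda>n. f n * g n) - \<tau> (\<lambda>n. f n * g n) = \<sigma> f * (\<sigma> g - \<tau> g) + \<tau> g * (\<sigma> f - \<tau> f)"
          using char_mult[OF \<sigma> fA gA] char_mult[OF \<tau> fA gA] by (simp add: algebra_simps)
        then have "cmod (\<sigma> (\<lambda>n. f n * g n) - \<tau> (\<lambda>n. f n * g n)) \<le> cmod (\<sigma> f) * cmod (\<sigma> g - \<tau> g) + cmod (\<tau> g) * cmod (\<sigma> f - \<tau> f)"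
          by (metis norm_mult norm_triangle_ineq)
        also have "\<dots> \<le> Bf * e + Bg * e"
          using b1 b2 d1 d2 Bf0 Bg0 by (intro add_mono mult_mono) auto
        also have "\<dots> < \<epsilon>"
        proof -
          have "Bf * e + Bg * e = (Bf + Bg) * e" by (simp add: algebra_simps)
          also have "\<dots> < (2 * (Bf + Bg + 1)) * e" using e0 Bf0 Bg0 by (intro mult_strict_right_mono) auto
          also have "\<dots> = \<epsilon>" unfolding e_def using Bf0 Bg0 by simp
          finally show ?thesis .
        qed
        finally show "cmod (\<sigma> (\<lambda>n. f n * g n) - \<tau> (\<lambda>n. f n * g n)) < \<epsilon>" .
      qed
    qed
  next
    fix c f assume f: "f \<in> M"
    have fA: "f \<in> ?A" and cf: "cgood h ?A f" using f unfolding M_def by auto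
    show "(\<lambda>n. c * f n) \<in> M" unfolding M_def
    proof (intro CollectI conjI cgoodI2)
      show "(\<lambda>n. c * f n) \<in> ?A" by (rule anqie_scal[OF A fA])
      fix \<epsilon> :: real assume \<epsilon>: "\<epsilon> > 0"
      define e where "e = \<epsilon> / (cmod c + 1)"
      have cp: "cmod c + 1 > 0" by (metis add_nonneg_pos norm_ge_zero zero_less_one)
      have e0: "e > 0" unfolding e_def by (rule divide_pos_pos[OF \<epsilon> cp])
      obtain L \<eta> where L: "\<eta> > 0" "\<forall>\<sigma>\<in>characters ?A. \<forall>\<tau>\<in>characters ?A.
        (\<forall>i<L. cmod (\<sigma> ((shift ^^ i) h) - \<tau> ((shift ^^ i) h)) < \<eta>) \<longrightarrow>
        cmod (\<sigma> f - \<tau> f) < e \<and> cmod (\<sigma> f - \<tau> f) < e"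
        using cgood_two[OF cf cf e0 e0] by auto
      show "\<exists>L \<eta>. \<eta> > 0 \<and> (\<forall>\<sigma>\<in>characters ?A. \<forall>\<tau>\<in>characters ?A.
        (\<forall>i<L. cmod (\<sigma> ((shift ^^ i) h) - \<tau> ((shift ^^ i) h)) < \<eta>) \<longrightarrow>
        cmod (\<sigma> (\<lambda>n. c * f n) - \<tau> (\<lambda>n. c * f n)) < \<epsilon>)"
      proof (intro exI conjI ballI impI)
        show "\<eta> > 0" by (rule L(1))
        fix \<sigma> \<tau> assume \<sigma>: "\<sigma> \<in> characters ?A" and \<tau>: "\<tau> \<in> characters ?A"
          and cl: "\<forall>i<L. cmod (\<sigma> ((shift ^^ i) h) - \<tau> ((shift ^^ i) h)) < \<eta>"
        have d1: "cmod (\<sigma> f - \<tau> f) < e" using L(2) \<sigma> \<tau> cl by auto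
        have "cmod (\<sigma> (\<lambda>n. c * f n) - \<tau> (\<lambda>n. c * f n)) = cmod c * cmod (\<sigma> f - \<tau> f)"
          using char_scal[OF \<sigma> fA, of c] char_scal[OF \<tau> fA, of c]
          by (simp add: right_diff_distrib[symmetric] norm_mult)
        also have "\<dots> \<le> cmod c * e" using d1 by (intro mult_left_mono) auto
        also have "\<dots> < (cmod c + 1) * e" using e0 by (simp add: distrib_right)
        also have "\<dots> = \<epsilon>" unfolding e_def using cp by simp
        finally show "cmod (\<sigma> (\<lambda>n. c * f n) - \<tau> (\<lambda>n. c * f n)) < \<epsilon>" .
      qed
    qed
  next
    fix f assume f: "f \<in> M"
    have fA: "f \<in> ?A" and cf: "cgood h ?A f" using f unfolding M_def by auto
    show "(\<lambda>n. cnj (f n)) \<in> M" unfolding M_def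
    proof (intro CollectI conjI cgoodI2)
      show "(\<lambda>n. cnj (f n)) \<in> ?A" by (rule anqie_cnj[OF A fA])
      fix \<epsilon> :: real assume \<epsilon>: "\<epsilon> > 0"
      obtain L \<eta> where L: "\<eta> > 0" "\<forall>\<sigma>\<in>characters ?A. \<forall>\<tau>\<in>characters ?A.
        (\<forall>i<L. cmod (\<sigma> ((shift ^^ i) h) - \<tau> ((shift ^^ i) h)) < \<eta>) \<longrightarrow> cmod (\<sigma> f - \<tau> f) < \<epsilon>"
        using cf \<epsilon> unfolding cgood_def by blast
      show "\<exists>L \<eta>. \<eta> > 0 \<and> (\<forall>\<sigma>\<in>characters ?A. \<forall>\<tau>\<in>characters ?A.
        (\<forall>i<L. cmod (\<sigma> ((shift ^^ i) h) - \<tau> ((shift ^^ i) h)) < \<eta>) \<longrightarrow>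
        cmod (\<sigma> (\<lambda>n. cnj (f n)) - \<tau> (\<lambda>n. cnj (f n))) < \<epsilon>)"
      proof (intro exI conjI ballI impI)
        show "\<eta> > 0" by (rule L(1))
        fix \<sigma> \<tau> assume \<sigma>: "\<sigma> \<in> characters ?A" and \<tau>: "\<tau> \<in> characters ?A"
          and cl: "\<forall>i<L. cmod (\<sigma> ((shift ^^ i) h) - \<tau> ((shift ^^ i) h)) < \<eta>"
        have "cmod (\<sigma> (\<lambda>n. cnj (f n)) - \<tau> (\<lambda>n. cnj (f n))) = cmod (cnj (\<sigma> f - \<tau> f))"
          using char_cnj[OF \<sigma> A _ fA] char_cnj[OF \<tau> A _ fA] by simp
        also have "\<dots> = cmod (\<sigma> f - \<tau> f)" by (rule complex_mod_cnj)
        also have "\<dots> < \<epsilon>" using L(2) \<sigma> \<tau> cl by blast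
        finally show "cmod (\<sigma> (\<lambda>n. cnj (f n)) - \<tau> (\<lambda>n. cnj (f n))) < \<epsilon>" .
      qed
    qed
  next
    fix f assume fl: "f \<in> linf" and ap: "\<forall>e>0. \<exists>g\<in>M. sup_norm (\<lambda>n. f n - g n) < e"
    have fA: "f \<in> ?A"
      by (rule anqie_closed[OF A fl]) (use ap MA in blast)
    show "f \<in> M" unfolding M_def
    proof (intro CollectI conjI cgoodI2 fA)
      fix \<epsilon> :: real assume \<epsilon>: "\<epsilon> > 0"
      have e3: "\<epsilon>/3 > 0" using \<epsilon> by simp
      obtain g where g: "g \<in> M" "sup_norm (\<lambda>n. f n - g n) < \<epsilon>/3" using ap e3 by blast
      have gA: "g \<in> ?A" and cg: "cgood h ?A g" using g(1) unfolding M_def by auto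
      obtain L \<eta> where L: "\<eta> > 0" "\<forall>\<sigma>\<in>characters ?A. \<forall>\<tau>\<in>characters ?A.
        (\<forall>i<L. cmod (\<sigma> ((shift ^^ i) h) - \<tau> ((shift ^^ i) h)) < \<eta>) \<longrightarrow> cmod (\<sigma> g - \<tau> g) < \<epsilon>/3"
        using cg e3 unfolding cgood_def by blast
      have dA: "(\<lambda>n. f n - g n) \<in> ?A" by (rule anqie_diff[OF A fA gA])
      show "\<exists>L \<eta>. \<eta> > 0 \<and> (\<forall>\<sigma>\<in>characters ?A. \<forall>\<tau>\<in>characters ?A.
        (\<forall>i<L. cmod (\<sigma> ((shift ^^ i) h) - \<tau> ((shift ^^ i) h)) < \<eta>) \<longrightarrow> cmod (\<sigma> f - \<tau> f) < \<epsilon>)"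
      proof (intro exI conjI ballI impI)
        show "\<eta> > 0" by (rule L(1))
        fix \<sigma> \<tau> assume \<sigma>: "\<sigma> \<in> characters ?A" and \<tau>: "\<tau> \<in> characters ?A"
          and cl: "\<forall>i<L. cmod (\<sigma> ((shift ^^ i) h) - \<tau> ((shift ^^ i) h)) < \<eta>"
        have s1: "cmod (\<sigma> f - \<sigma> g) < \<epsilon>/3"
          using char_bound[OF \<sigma> A _ dA] char_minus[OF \<sigma> A _ fA gA] g(2) by simp
        have s2: "cmod (\<tau> f - \<tau> g) < \<epsilon>/3"
          using char_bound[OF \<tau> A _ dA] char_minus[OF \<tau> A _ fA gA] g(2) by simp
        have s3: "cmod (\<sigma> g - \<tau> g) < \<epsilon>/3" using L(2) \<sigma> \<tau> cl by auto
        have eq: "\<sigma> f - \<tau> f = ((\<sigma> f - \<sigma> g) + (\<sigma> g - \<tau> g)) - (\<tau> f - \<tau> g)" by simp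
        have t1: "cmod (\<sigma> f - \<tau> f) \<le> cmod ((\<sigma> f - \<sigma> g) + (\<sigma> g - \<tau> g)) + cmod (\<tau> f - \<tau> g)"
          unfolding eq by (rule norm_triangle_ineq4)
        have t2: "cmod ((\<sigma> f - \<sigma> g) + (\<sigma> g - \<tau> g)) \<le> cmod (\<sigma> f - \<sigma> g) + cmod (\<sigma> g - \<tau> g)"
          by (rule norm_triangle_ineq)
        have "cmod (\<sigma> f - \<tau> f) \<le> cmod (\<sigma> f - \<sigma> g) + cmod (\<sigma> g - \<tau> g) + cmod (\<tau> f - \<tau> g)"
          using t1 t2 by linarith
        then show "cmod (\<sigma> f - \<tau> f) < \<epsilon>" using s1 s2 s3 by linarith
      qed
    qed
  next
    show "shift ` M \<subseteq> M"
    proof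
      fix x assume "x \<in> shift ` M"
      then obtain f where f: "f \<in> M" and x: "x = shift f" by auto
      have fA: "f \<in> ?A" and cf: "cgood h ?A f" using f unfolding M_def by auto
      show "x \<in> M" unfolding M_def x
      proof (intro CollectI conjI cgoodI2)
        show "shift f \<in> ?A" by (rule anqie_shift[OF A fA])
        fix \<epsilon> :: real assume \<epsilon>: "\<epsilon> > 0"
        obtain L \<eta> where L: "\<eta> > 0" "\<forall>\<sigma>\<in>characters ?A. \<forall>\<tau>\<in>characters ?A.
          (\<forall>i<L. cmod (\<sigma> ((shift ^^ i) h) - \<tau> ((shift ^^ i) h)) < \<eta>) \<longrightarrow> cmod (\<sigma> f - \<tau> f) < \<epsilon>"
          using cf \<epsilon> unfolding cgood_def by blast
        show "\<exists>L \<eta>. \<eta> > 0 \<and> (\<forall>\<sigma>\<in>characters ?A. \<forall>\<tau>\<in>characters ?A.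
          (\<forall>i<L. cmod (\<sigma> ((shift ^^ i) h) - \<tau> ((shift ^^ i) h)) < \<eta>) \<longrightarrow> cmod (\<sigma> (shift f) - \<tau> (shift f)) < \<epsilon>)"
        proof (intro exI[of _ "Suc L"] exI[of _ \<eta>] conjI ballI impI)
          show "\<eta> > 0" by (rule L(1))
          fix \<sigma> \<tau> assume \<sigma>: "\<sigma> \<in> characters ?A" and \<tau>: "\<tau> \<in> characters ?A"
            and cl: "\<forall>i<Suc L. cmod (\<sigma> ((shift ^^ i) h) - \<tau> ((shift ^^ i) h)) < \<eta>"
          have T\<sigma>: "anqie_map ?A \<sigma> \<in> characters ?A" by (rule map_char[OF A \<sigma>])
          have T\<tau>: "anqie_map ?A \<tau> \<in> characters ?A" by (rule map_char[OF A \<tau>])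
          have ev: "anqie_map ?A \<rho> g = \<rho> (shift g)" if "g \<in> ?A" for \<rho> g
            unfolding anqie_map_def using that by simp
          have "\<forall>i<L. cmod (anqie_map ?A \<sigma> ((shift ^^ i) h) - anqie_map ?A \<tau> ((shift ^^ i) h)) < \<eta>"
          proof (intro allI impI)
            fix i assume i: "i < L"
            have "(shift ^^ i) h \<in> ?A" by (rule anqie_shift_pow[OF A hA])
            then have "cmod (anqie_map ?A \<sigma> ((shift ^^ i) h) - anqie_map ?A \<tau> ((shift ^^ i) h))
               = cmod (\<sigma> ((shift ^^ Suc i) h) - \<tau> ((shift ^^ Suc i) h))" using ev by simp
            also have "\<dots> < \<eta>" using cl i by (metis Suc_mono)
            finally show "cmod (anqie_map ?A \<sigma> ((shift ^^ i) h) - anqie_map ?A \<tau> ((shift ^^ i) h)) < \<eta>" .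
          qed
          then have "cmod (anqie_map ?A \<sigma> f - anqie_map ?A \<tau> f) < \<epsilon>" using L(2) T\<sigma> T\<tau> by blast
          then show "cmod (\<sigma> (shift f) - \<tau> (shift f)) < \<epsilon>" using ev[OF fA] by simp
        qed
      qed
    qed
  qed
  moreover have "h \<in> M" unfolding M_def
  proof (intro CollectI conjI cgoodI2 hA)
    fix \<epsilon> :: real assume \<epsilon>: "\<epsilon> > 0"
    show "\<exists>L \<eta>. \<eta> > 0 \<and> (\<forall>\<sigma>\<in>characters ?A. \<forall>\<tau>\<in>characters ?A.
          (\<forall>i<L. cmod (\<sigma> ((shift ^^ i) h) - \<tau> ((shift ^^ i) h)) < \<eta>) \<longrightarrow> cmod (\<sigma> h - \<tau> h) < \<epsilon>)"
      by (rule exI[of _ 1], rule exI[of _ \<epsilon>]) (use \<epsilon> in auto)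
  qed
  ultimately have "?A \<subseteq> M" using anqie_gen(3)[OF hl] by blast
  then show ?thesis using q unfolding M_def by auto
qed



lemma coordF:
  assumes hl: "h \<in> linf" and fin: "finite F" and FA: "F \<subseteq> anqie_gen h" and r: "r > 0"
  shows "\<exists>L \<eta>. \<eta> > 0 \<and> (\<forall>\<sigma>\<in>characters (anqie_gen h). \<forall>\<tau>\<in>characters (anqie_gen h).
     (\<forall>i<L. cmod (\<sigma> ((shift ^^ i) h) - \<tau> ((shift ^^ i) h)) < \<eta>) \<longrightarrow> (\<forall>q\<in>F. cmod (\<sigma> q - \<tau> q) < r))"
  using fin FA
proof (induction F rule: finite_induct)
  case empty
  show ?case by (rule exI[of _ 0], rule exI[of _ 1]) auto
next
  case (insert q F)
  obtain L2 \<eta>2 where 2: "\<eta>2 > 0" "\<forall>\<sigma>\<in>characters (anqie_gen h). \<forall>\<tau>\<in>characters (anqie_gen h).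
     (\<forall>i<L2. cmod (\<sigma> ((shift ^^ i) h) - \<tau> ((shift ^^ i) h)) < \<eta>2) \<longrightarrow> (\<forall>q\<in>F. cmod (\<sigma> q - \<tau> q) < r)"
    using insert by auto
  have "cgood h (anqie_gen h) q" by (rule coord[OF hl]) (use insert in auto)
  then obtain L1 \<eta>1 where 1: "\<eta>1 > 0" "\<forall>\<sigma>\<in>characters (anqie_gen h). \<forall>\<tau>\<in>characters (anqie_gen h).
     (\<forall>i<L1. cmod (\<sigma> ((shift ^^ i) h) - \<tau> ((shift ^^ i) h)) < \<eta>1) \<longrightarrow> cmod (\<sigma> q - \<tau> q) < r"
    using r unfolding cgood_def by blast
  show ?case
    by (rule exI[of _ "max L1 L2"], rule exI[of _ "min \<eta>1 \<eta>2"]) (use 1 2 in auto)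
qed

lemma count:
  assumes hl: "h \<in> linf"
    and P: "\<forall>\<sigma>\<in>characters (anqie_gen h). \<exists>U\<in>\<U>. \<forall>\<tau>\<in>characters (anqie_gen h).
       (\<forall>i<L. cmod (\<tau> ((shift ^^ i) h) - \<sigma> ((shift ^^ i) h)) < \<eta>) \<longrightarrow> \<tau> \<in> U"
    and \<eta>: "\<eta> > 0" and C: "finite C"
    and win: "\<forall>m. \<exists>c\<in>C. \<forall>i<n + L. cmod (h (m + i) - c i) \<le> \<eta> / 4"
  shows "cover_num (weakstar (anqie_gen h)) (iter_join (weakstar (anqie_gen h)) (anqie_map (anqie_gen h)) \<U> n) \<le> card C"
proof -
  let ?A = "anqie_gen h"
  let ?X = "weakstar ?A" and ?T = "anqie_map ?A"
  define sh where "sh = (\<lambda>i. (shift ^^ i) h)"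
  have A: "is_anqie ?A" and hA: "h \<in> ?A" using anqie_gen[OF hl] by auto
  have shA: "sh i \<in> ?A" for i unfolding sh_def by (rule anqie_shift_pow[OF A hA])
  define B where "B = (\<lambda>c. {\<tau> \<in> characters ?A. \<forall>i<n + L. cmod (\<tau> (sh i) - c i) \<le> \<eta> / 3})"
  have covB: "\<exists>c\<in>C. \<tau> \<in> B c" if \<tau>: "\<tau> \<in> characters ?A" for \<tau>
  proof -
    obtain m where m: "\<forall>i<n + L. cmod (sh i m - \<tau> (sh i)) < \<eta> / 12"
      using density[OF A \<tau>, of "n + L" sh "\<eta>/12"] shA \<eta> by auto
    obtain c where c: "c \<in> C" "\<forall>i<n + L. cmod (h (m + i) - c i) \<le> \<eta> / 4" using win by blast
    have "cmod (\<tau> (sh i) - c i) \<le> \<eta> / 3" if i: "i < n + L" for i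
    proof -
      have e: "sh i m = h (m + i)" unfolding sh_def by (simp add: shift_pow_apply)
      have "\<tau> (sh i) - c i = (h (m + i) - c i) - (sh i m - \<tau> (sh i))" using e by simp
      then have "cmod (\<tau> (sh i) - c i) \<le> cmod (h (m + i) - c i) + cmod (sh i m - \<tau> (sh i))"
        by (metis norm_triangle_ineq4)
      then show ?thesis using m c(2) i by fastforce
    qed
    then show ?thesis using c(1) \<tau> unfolding B_def by blast
  qed
  define Ufor where "Ufor = (\<lambda>\<sigma>. SOME U. U \<in> \<U> \<and> (\<forall>\<tau>\<in>characters ?A.
       (\<forall>i<L. cmod (\<tau> (sh i) - \<sigma> (sh i)) < \<eta>) \<longrightarrow> \<tau> \<in> U))"
  have Ufor: "Ufor \<sigma> \<in> \<U> \<and> (\<forall>\<tau>\<in>characters ?A. (\<forall>i<L. cmod (\<tau> (sh i) - \<sigma> (sh i)) < \<eta>) \<longrightarrow> \<tau> \<in> Ufor \<sigma>)"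
    if "\<sigma> \<in> characters ?A" for \<sigma>
    unfolding Ufor_def by (rule someI_ex) (use P that in \<open>auto simp: sh_def\<close>)
  define t0 where "t0 = (\<lambda>c. SOME \<tau>. \<tau> \<in> B c)"
  define W where "W = (\<lambda>c. topspace ?X \<inter> (\<Inter>j<n. (?T ^^ j) -` (Ufor ((?T ^^ j) (t0 c)))))"
  define C' where "C' = {c \<in> C. B c \<noteq> {}}"
  define V where "V = W ` C'"
  have t0: "t0 c \<in> B c" if "c \<in> C'" for c
    using that unfolding t0_def C'_def by (simp add: some_in_eq)
  have t0c: "t0 c \<in> characters ?A" if "c \<in> C'" for c using t0[OF that] unfolding B_def by auto
  have "V \<subseteq> iter_join ?X ?T \<U> n"
  proof
    fix x assume "x \<in> V"
    then obtain c where c: "c \<in> C'" "x = W c" unfolding V_def by auto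
    have U: "\<forall>i<n. Ufor ((?T ^^ i) (t0 c)) \<in> \<U>" using Ufor map_pow_char[OF A t0c[OF c(1)]] by blast
    show "x \<in> iter_join ?X ?T \<U> n" unfolding iter_join_mem c(2) W_def
      by (rule exI[of _ "\<lambda>i. Ufor ((?T ^^ i) (t0 c))"]) (use U in simp)
  qed
  moreover have "finite V" unfolding V_def C'_def using C by auto
  moreover have "\<Union>V = topspace ?X"
  proof (intro equalityI subsetI)
    fix x assume "x \<in> \<Union>V" then show "x \<in> topspace ?X" unfolding V_def W_def by auto
  next
    fix \<tau> assume "\<tau> \<in> topspace ?X"
    then have \<tau>: "\<tau> \<in> characters ?A" by simp
    obtain c where c: "c \<in> C" "\<tau> \<in> B c" using covB[OF \<tau>] by blast
    then have cC: "c \<in> C'" unfolding C'_def by auto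
    have "\<tau> \<in> W c" unfolding W_def
    proof (intro IntI INT_I)
      show "\<tau> \<in> topspace ?X" using \<tau> by simp
      fix j assume j: "j \<in> {..<n}"
      let ?\<sigma> = "(?T ^^ j) (t0 c)"
      have \<sigma>c: "?\<sigma> \<in> characters ?A" by (rule map_pow_char[OF A t0c[OF cC]])
      have Tc: "(?T ^^ j) \<tau> \<in> characters ?A" by (rule map_pow_char[OF A \<tau>])
      have "cmod ((?T ^^ j) \<tau> (sh i) - ?\<sigma> (sh i)) < \<eta>" if i: "i < L" for i
      proof -
        have e: "(shift ^^ j) (sh i) = sh (j + i)" unfolding sh_def by (simp add: funpow_add)
        have "(?T ^^ j) \<tau> (sh i) = \<tau> (sh (j + i))" using map_pow_apply[OF A shA[of i]] e by simp
        moreover have "?\<sigma> (sh i) = t0 c (sh (j + i))" using map_pow_apply[OF A shA[of i]] e by simp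
        moreover have "j + i < n + L" using i j by auto
        then have "cmod (\<tau> (sh (j + i)) - c (j + i)) \<le> \<eta> / 3" "cmod (t0 c (sh (j + i)) - c (j + i)) \<le> \<eta> / 3"
          using c(2) t0[OF cC] unfolding B_def by auto
        moreover have "cmod (\<tau> (sh (j + i)) - t0 c (sh (j + i))) \<le>
            cmod (\<tau> (sh (j + i)) - c (j + i)) + cmod (t0 c (sh (j + i)) - c (j + i))"
          by (metis norm_minus_commute norm_triangle_ineq diff_add_cancel add_diff_eq)
        ultimately show ?thesis using \<eta> by simp
      qed
      then have "(?T ^^ j) \<tau> \<in> Ufor ?\<sigma>" using Ufor[OF \<sigma>c] Tc by blast
      then show "\<tau> \<in> (?T ^^ j) -` Ufor ((?T ^^ j) (t0 c))" by simp
    qed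
    then show "\<tau> \<in> \<Union>V" unfolding V_def using cC by blast
  qed
  ultimately have "cover_num ?X (iter_join ?X ?T \<U> n) \<le> card V" by (rule cover_num_le)
  also have "card V \<le> card C'" unfolding V_def by (rule card_image_le) (use C in \<open>simp add: C'_def\<close>)
  also have "card C' \<le> card C" unfolding C'_def using C by (intro card_mono) auto
  finally show ?thesis .
qed



lemma entropy_from_subexp:
  assumes hl: "h \<in> linf" and se: "subexp h"
  shows "AE_anqie (anqie_gen h) \<le> 0"
proof -
  let ?A = "anqie_gen h"
  let ?X = "weakstar ?A" and ?T = "anqie_map ?A"
  have A: "is_anqie ?A" and hA: "h \<in> ?A" using anqie_gen[OF hl] by auto
  have cpt: "compact_space ?X" by (rule compact_chars[OF hered_anqie[OF A]])
  have "cover_entropy ?X ?T \<U> \<le> 0" if oc: "open_cover ?X \<U>" for \<U>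
  proof -
    have op: "\<And>U. U \<in> \<U> \<Longrightarrow> openin ?X U" and cov: "characters ?A \<subseteq> \<Union>\<U>"
      using oc unfolding open_cover_def by auto
    obtain F r where Fr: "finite F" "F \<subseteq> ?A" "r > 0"
      "\<forall>\<sigma>\<in>characters ?A. \<exists>U\<in>\<U>. \<forall>\<tau>\<in>characters ?A. (\<forall>q\<in>F. cmod (\<tau> q - \<sigma> q) < r) \<longrightarrow> \<tau> \<in> U"
      using lebesgue[OF cpt op cov] by blast
    obtain L \<eta> where L: "\<eta> > 0" "\<forall>\<sigma>\<in>characters ?A. \<forall>\<tau>\<in>characters ?A.
       (\<forall>i<L. cmod (\<sigma> ((shift ^^ i) h) - \<tau> ((shift ^^ i) h)) < \<eta>) \<longrightarrow> (\<forall>q\<in>F. cmod (\<sigma> q - \<tau> q) < r)"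
      using coordF[OF hl Fr(1,2,3)] by blast
    have P: "\<forall>\<sigma>\<in>characters ?A. \<exists>U\<in>\<U>. \<forall>\<tau>\<in>characters ?A.
       (\<forall>i<L. cmod (\<tau> ((shift ^^ i) h) - \<sigma> ((shift ^^ i) h)) < \<eta>) \<longrightarrow> \<tau> \<in> U"
    proof
      fix \<sigma> assume \<sigma>: "\<sigma> \<in> characters ?A"
      obtain U where U: "U \<in> \<U>" "\<forall>\<tau>\<in>characters ?A. (\<forall>q\<in>F. cmod (\<tau> q - \<sigma> q) < r) \<longrightarrow> \<tau> \<in> U"
        using Fr(4) \<sigma> by blast
      show "\<exists>U\<in>\<U>. \<forall>\<tau>\<in>characters ?A.
       (\<forall>i<L. cmod (\<tau> ((shift ^^ i) h) - \<sigma> ((shift ^^ i) h)) < \<eta>) \<longrightarrow> \<tau> \<in> U"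
        using U L(2) \<sigma> by blast
    qed
    show ?thesis unfolding cover_entropy_def
    proof (rule Limsup_le_iff[THEN iffD2], intro allI impI)
      fix y :: ereal assume y: "y > 0"
      show "eventually (\<lambda>n. y > ereal (ln (real (cover_num ?X (iter_join ?X ?T \<U> n))) / real n)) sequentially"
      proof (cases y)
        case PInf then show ?thesis by simp
      next
        case MInf then show ?thesis using y by simp
      next
        case (real a)
        then have a: "a > 0" using y by simp
        have "eventually (\<lambda>m. \<exists>C. finite C \<and> real (card C) \<le> exp (a / 4 * real m) \<and>
           (\<forall>k. \<exists>c\<in>C. \<forall>i<m. cmod (h (k + i) - c i) \<le> \<eta> / 4)) sequentially"
        proof -
          have e4: "\<eta> / 4 > 0" using L(1) by simp
          have a4: "a / 4 > 0" using a by simp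
          show ?thesis using se[unfolded subexp_def, rule_format, OF e4 a4] .
        qed
        then obtain N0 where N0: "\<And>m. m \<ge> N0 \<Longrightarrow> \<exists>C. finite C \<and> real (card C) \<le> exp (a / 4 * real m) \<and>
           (\<forall>k. \<exists>c\<in>C. \<forall>i<m. cmod (h (k + i) - c i) \<le> \<eta> / 4)"
          unfolding eventually_sequentially by blast
        show ?thesis unfolding real eventually_sequentially
        proof (intro exI[of _ "max N0 (max L 1)"] allI impI)
          fix n assume n: "max N0 (max L 1) \<le> n"
          obtain C where C: "finite C" "real (card C) \<le> exp (a / 4 * real (n + L))"
             "\<forall>k. \<exists>c\<in>C. \<forall>i<n + L. cmod (h (k + i) - c i) \<le> \<eta> / 4"
            using N0[of "n + L"] n by auto
          define N where "N = cover_num ?X (iter_join ?X ?T \<U> n)"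
          have "N \<le> card C" unfolding N_def by (rule count[OF hl P L(1) C(1) C(3)])
          then have "real N \<le> exp (a / 4 * real (n + L))" using C(2) by linarith
          also have "\<dots> \<le> exp (a / 2 * real n)"
            using n a by (simp add: field_simps)
          finally have NB: "real N \<le> exp (a / 2 * real n)" .
          have lnN: "ln (real N) \<le> a / 2 * real n"
          proof (cases "N = 0")
            case True then show ?thesis using a by simp
          next
            case False
            then have "ln (real N) \<le> ln (exp (a / 2 * real n))" using NB by (subst ln_le_cancel_iff) auto
            then show ?thesis by simp
          qed
          have n1: "real n \<ge> 1" using n by simp
          have "ln (real N) / real n \<le> a / 2" using lnN n1 by (simp add: divide_le_eq)
          then have "ln (real N) / real n < a" using a by linarith
          then show "ereal a > ereal (ln (real (cover_num ?X (iter_join ?X ?T \<U> n))) / real n)"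
            unfolding N_def by simp
        qed
      qed
    qed
  qed
  then show ?thesis unfolding AE_anqie_def top_entropy_def by (intro SUP_least) auto
qed

lemma E0_iff: "h \<in> E0 \<longleftrightarrow> h \<in> linf \<and> subexp h"
proof
  assume h: "h \<in> E0"
  then have hl: "h \<in> linf" and ae: "AE_anqie (anqie_gen h) = 0" unfolding E0_def AE_fun_def by auto
  show "h \<in> linf \<and> subexp h"
    using hl subexp_from_entropy[of "anqie_gen h" h] anqie_gen[OF hl] ae by auto
next
  assume h: "h \<in> linf \<and> subexp h"
  then have "AE_anqie (anqie_gen h) \<le> 0" using entropy_from_subexp by blast
  moreover have "AE_anqie (anqie_gen h) \<ge> 0" unfolding AE_anqie_def by (rule top_entropy_nonneg)
  ultimately show "h \<in> E0" unfolding E0_def AE_fun_def using h by auto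
qed

lemma E0_hered: assumes g: "g \<in> E0" shows "anqie_gen g \<subseteq> E0"
proof
  fix k assume k: "k \<in> anqie_gen g"
  have gl: "g \<in> linf" and ae: "AE_anqie (anqie_gen g) = 0" using g unfolding E0_def AE_fun_def by auto
  have A: "is_anqie (anqie_gen g)" using anqie_gen[OF gl] by auto
  have "subexp k" by (rule subexp_from_entropy[OF A _ k]) (use ae in simp)
  moreover have "k \<in> linf" using anqie_linf[OF A] k by auto
  ultimately show "k \<in> E0" using E0_iff by blast
qed

lemma hered_E0: "hered E0"
  unfolding hered_def using E0_hered anqie_gen E0_iff by blast



lemma exp_ge_1: "0 \<le> x \<Longrightarrow> 1 \<le> exp (x::real)"
  by simp

lemma subexp_const: "subexp (\<lambda>_. c)"
  unfolding subexp_def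
proof (intro allI impI always_eventually)
  fix \<epsilon> a :: real and n :: nat assume "\<epsilon> > 0" "a > 0"
  then show "\<exists>C. finite C \<and> real (card C) \<le> exp (a * real n) \<and> (\<forall>m. \<exists>c'\<in>C. \<forall>i<n. cmod (c - c' i) \<le> \<epsilon>)"
    by (intro exI[of _ "{\<lambda>i. c}"]) auto
qed

lemma subexp_approx:
  assumes fl: "f \<in> linf" and ap: "\<And>e. e > 0 \<Longrightarrow> \<exists>g. g \<in> linf \<and> subexp g \<and> sup_norm (\<lambda>n. f n - g n) < e"
  shows "subexp f"
  unfolding subexp_def
proof (intro allI impI)
  fix \<epsilon> a :: real assume \<epsilon>: "\<epsilon> > 0" and a: "a > 0"
  obtain g where g: "g \<in> linf" "subexp g" "sup_norm (\<lambda>n. f n - g n) < \<epsilon>/2" using ap[of "\<epsilon>/2"] \<epsilon> by auto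
  have e2: "\<epsilon>/2 > 0" using \<epsilon> by simp
  have ev: "eventually (\<lambda>n. \<exists>C. finite C \<and> real (card C) \<le> exp (a * real n) \<and>
       (\<forall>m. \<exists>c\<in>C. \<forall>i<n. cmod (g (m + i) - c i) \<le> \<epsilon>/2)) sequentially"
    using g(2)[unfolded subexp_def, rule_format, OF e2 a] .
  show "eventually (\<lambda>n. \<exists>C. finite C \<and> real (card C) \<le> exp (a * real n) \<and>
       (\<forall>m. \<exists>c\<in>C. \<forall>i<n. cmod (f (m + i) - c i) \<le> \<epsilon>)) sequentially"
    using ev
  proof eventually_elim
    case (elim n)
    then obtain C where C: "finite C" "real (card C) \<le> exp (a * real n)"
      "\<forall>m. \<exists>c\<in>C. \<forall>i<n. cmod (g (m + i) - c i) \<le> \<epsilon>/2" by blast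
    have "\<forall>m. \<exists>c\<in>C. \<forall>i<n. cmod (f (m + i) - c i) \<le> \<epsilon>"
    proof
      fix m
      obtain c where c: "c \<in> C" "\<forall>i<n. cmod (g (m + i) - c i) \<le> \<epsilon>/2" using C(3) by blast
      have "cmod (f (m + i) - c i) \<le> \<epsilon>" if "i < n" for i
      proof -
        have "cmod (f (m + i) - g (m + i)) < \<epsilon>/2" by (rule sup_norm_less[OF fl g(1) g(3)])
        moreover have "cmod (f (m + i) - c i) \<le> cmod (f (m + i) - g (m + i)) + cmod (g (m + i) - c i)"
          using norm_triangle_ineq[of "f (m + i) - g (m + i)" "g (m + i) - c i"] by simp
        ultimately show ?thesis using c(2) that by fastforce
      qed
      then show "\<exists>c\<in>C. \<forall>i<n. cmod (f (m + i) - c i) \<le> \<epsilon>" using c(1) by blast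
    qed
    then show ?case using C(1,2) by blast
  qed
qed

lemma subexp_combine:
  assumes sf: "subexp f" and sg: "subexp g"
    and comb: "\<And>\<epsilon>. \<epsilon> > 0 \<Longrightarrow> \<exists>e>0. \<forall>x y c d. cmod (f x - c) \<le> e \<longrightarrow> cmod (g y - d) \<le> e \<longrightarrow> x = y \<longrightarrow>
        cmod (p x - op c d) \<le> \<epsilon>"
  shows "subexp p"
  unfolding subexp_def
proof (intro allI impI)
  fix \<epsilon> a :: real assume \<epsilon>: "\<epsilon> > 0" and a: "a > 0"
  obtain e where e: "e > 0" "\<forall>x y c d. cmod (f x - c) \<le> e \<longrightarrow> cmod (g y - d) \<le> e \<longrightarrow> x = y \<longrightarrow>
        cmod (p x - op c d) \<le> \<epsilon>" using comb[OF \<epsilon>] by blast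
  have a2: "a/2 > 0" using a by simp
  have ev: "eventually (\<lambda>n. (\<exists>C. finite C \<and> real (card C) \<le> exp (a/2 * real n) \<and>
       (\<forall>m. \<exists>c\<in>C. \<forall>i<n. cmod (f (m + i) - c i) \<le> e)) \<and> (\<exists>C. finite C \<and> real (card C) \<le> exp (a/2 * real n) \<and>
       (\<forall>m. \<exists>c\<in>C. \<forall>i<n. cmod (g (m + i) - c i) \<le> e))) sequentially"
    using sf[unfolded subexp_def, rule_format, OF e(1) a2] sg[unfolded subexp_def, rule_format, OF e(1) a2]
    by (rule eventually_conj)
  show "eventually (\<lambda>n. \<exists>C. finite C \<and> real (card C) \<le> exp (a * real n) \<and>
       (\<forall>m. \<exists>c\<in>C. \<forall>i<n. cmod (p (m + i) - c i) \<le> \<epsilon>)) sequentially"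
    using ev
  proof eventually_elim
    case (elim n)
    then obtain C1 C2 where C1: "finite C1" "real (card C1) \<le> exp (a/2 * real n)"
      "\<forall>m. \<exists>c\<in>C1. \<forall>i<n. cmod (f (m + i) - c i) \<le> e"
      and C2: "finite C2" "real (card C2) \<le> exp (a/2 * real n)"
      "\<forall>m. \<exists>c\<in>C2. \<forall>i<n. cmod (g (m + i) - c i) \<le> e" by blast
    define C where "C = (\<lambda>(c, d). \<lambda>i. op (c i) (d i)) ` (C1 \<times> C2)"
    have "finite C" unfolding C_def using C1(1) C2(1) by auto
    moreover have "real (card C) \<le> exp (a * real n)"
    proof -
      have "card C \<le> card (C1 \<times> C2)" unfolding C_def using C1(1) C2(1) by (intro card_image_le) auto
      also have "\<dots> = card C1 * card C2" by (rule card_cartesian_product)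
      finally have "real (card C) \<le> real (card C1 * card C2)" by (simp only: of_nat_le_iff)
      then have "real (card C) \<le> real (card C1) * real (card C2)" by simp
      also have "\<dots> \<le> exp (a/2 * real n) * exp (a/2 * real n)"
        using C1(2) C2(2) by (intro mult_mono) auto
      also have "\<dots> = exp (a * real n)" by (simp add: exp_add[symmetric])
      finally show ?thesis .
    qed
    moreover have "\<forall>m. \<exists>c\<in>C. \<forall>i<n. cmod (p (m + i) - c i) \<le> \<epsilon>"
    proof
      fix m
      obtain c where c: "c \<in> C1" "\<forall>i<n. cmod (f (m + i) - c i) \<le> e" using C1(3) by blast
      obtain d where d: "d \<in> C2" "\<forall>i<n. cmod (g (m + i) - d i) \<le> e" using C2(3) by blast
      have mem: "(\<lambda>i. op (c i) (d i)) \<in> C" unfolding C_def using c(1) d(1) by force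
      have bnd: "\<forall>i<n. cmod (p (m + i) - op (c i) (d i)) \<le> \<epsilon>" using e(2) c(2) d(2) by blast
      show "\<exists>c\<in>C. \<forall>i<n. cmod (p (m + i) - c i) \<le> \<epsilon>" by (rule bexI[OF _ mem]) (use bnd in simp)
    qed
    ultimately show ?case by (intro exI[of _ C]) simp
  qed
qed

lemma subexp_add: assumes sf: "subexp f" and sg: "subexp g" shows "subexp (\<lambda>n. f n + g n)"
proof (rule subexp_combine[OF sf sg, where op = "(+)"])
  fix \<epsilon> :: real assume \<epsilon>: "\<epsilon> > 0"
  show "\<exists>e>0. \<forall>x y c d. cmod (f x - c) \<le> e \<longrightarrow> cmod (g y - d) \<le> e \<longrightarrow> x = y \<longrightarrow>
        cmod (f x + g x - (c + d)) \<le> \<epsilon>"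
  proof (intro exI[of _ "\<epsilon>/2"] conjI allI impI)
    fix x y c d assume 1: "cmod (f x - c) \<le> \<epsilon>/2" and 2: "cmod (g y - d) \<le> \<epsilon>/2" and "x = y"
    have "cmod (f x + g x - (c + d)) \<le> cmod (f x - c) + cmod (g x - d)"
      using norm_triangle_ineq[of "f x - c" "g x - d"] by (simp add: algebra_simps)
    then show "cmod (f x + g x - (c + d)) \<le> \<epsilon>" using 1 2 \<open>x = y\<close> by simp
  qed (use \<epsilon> in simp)
qed

lemma subexp_mult:
  assumes fl: "f \<in> linf" and gl: "g \<in> linf" and sf: "subexp f" and sg: "subexp g"
  shows "subexp (\<lambda>n. f n * g n)"
proof (rule subexp_combine[OF sf sg, where op = "(*)"])
  fix \<epsilon> :: real assume \<epsilon>: "\<epsilon> > 0"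
  obtain Bf where Bf: "\<And>n. cmod (f n) \<le> Bf" using fl unfolding linf_iff by auto
  obtain Bg where Bg: "\<And>n. cmod (g n) \<le> Bg" using gl unfolding linf_iff by auto
  have Bf0: "Bf \<ge> 0" using Bf[of 0] norm_ge_zero[of "f 0"] by linarith
  have Bg0: "Bg \<ge> 0" using Bg[of 0] norm_ge_zero[of "g 0"] by linarith
  define e where "e = min 1 (\<epsilon> / (Bf + Bg + 1))"
  have e0: "e > 0" unfolding e_def using \<epsilon> Bf0 Bg0 by simp
  have D: "Bf + Bg + 1 > 0" using Bf0 Bg0 by simp
  have e1: "e \<le> 1" unfolding e_def by simp
  have "e \<le> \<epsilon> / (Bf + Bg + 1)" unfolding e_def by simp
  then have e2: "e * (Bf + Bg + 1) \<le> \<epsilon>" using D by (simp add: le_divide_eq)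
  show "\<exists>e>0. \<forall>x y c d. cmod (f x - c) \<le> e \<longrightarrow> cmod (g y - d) \<le> e \<longrightarrow> x = y \<longrightarrow>
        cmod (f x * g x - c * d) \<le> \<epsilon>"
  proof (intro exI[of _ e] conjI allI impI e0)
    fix x y c d assume 1: "cmod (f x - c) \<le> e" and 2: "cmod (g y - d) \<le> e" and xy: "x = y"
    have h2x: "cmod (g x - d) \<le> e" using 2 xy by simp
    have dB: "cmod d \<le> Bg + 1"
    proof -
      have "cmod d \<le> cmod (g x) + cmod (g x - d)" using norm_triangle_ineq4[of "g x" "g x - d"] by simp
      then show ?thesis using Bg[of x] h2x e1 by linarith
    qed
    have eq: "f x * g x - c * d = f x * (g x - d) + d * (f x - c)" by (simp add: algebra_simps)
    have "cmod (f x * g x - c * d) \<le> cmod (f x) * cmod (g x - d) + cmod d * cmod (f x - c)"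
      unfolding eq using norm_triangle_ineq[of "f x * (g x - d)" "d * (f x - c)"] by (simp add: norm_mult)
    also have "\<dots> \<le> Bf * e + (Bg + 1) * e"
      using Bf[of x] 1 h2x dB Bf0 Bg0 by (intro add_mono mult_mono) auto
    also have "\<dots> = e * (Bf + Bg + 1)" by (simp add: algebra_simps)
    also have "\<dots> \<le> \<epsilon>" by (rule e2)
    finally show "cmod (f x * g x - c * d) \<le> \<epsilon>" .
  qed
qed

lemma subexp_scal: assumes sf: "subexp f" shows "subexp (\<lambda>n. k * f n)"
  unfolding subexp_def
proof (intro allI impI)
  fix \<epsilon> a :: real assume \<epsilon>: "\<epsilon> > 0" and a: "a > 0"
  have cp: "cmod k + 1 > 0" by (metis add_nonneg_pos norm_ge_zero zero_less_one)
  define e where "e = \<epsilon> / (cmod k + 1)"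
  have e0: "e > 0" unfolding e_def by (rule divide_pos_pos[OF \<epsilon> cp])
  have ek: "cmod k * e \<le> \<epsilon>"
  proof -
    have "cmod k * e \<le> (cmod k + 1) * e" using e0 by (intro mult_right_mono) auto
    also have "\<dots> = \<epsilon>" unfolding e_def using cp by simp
    finally show ?thesis .
  qed
  have ev: "eventually (\<lambda>n. \<exists>C. finite C \<and> real (card C) \<le> exp (a * real n) \<and>
       (\<forall>m. \<exists>c\<in>C. \<forall>i<n. cmod (f (m + i) - c i) \<le> e)) sequentially"
    using sf[unfolded subexp_def, rule_format, OF e0 a] .
  show "eventually (\<lambda>n. \<exists>C. finite C \<and> real (card C) \<le> exp (a * real n) \<and>
       (\<forall>m. \<exists>c\<in>C. \<forall>i<n. cmod (k * f (m + i) - c i) \<le> \<epsilon>)) sequentially"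
    using ev
  proof eventually_elim
    case (elim n)
    then obtain C where C: "finite C" "real (card C) \<le> exp (a * real n)"
      "\<forall>m. \<exists>c\<in>C. \<forall>i<n. cmod (f (m + i) - c i) \<le> e" by blast
    define C' where "C' = (\<lambda>c. \<lambda>i. k * c i) ` C"
    have "finite C'" unfolding C'_def using C(1) by auto
    moreover have "real (card C') \<le> exp (a * real n)"
    proof -
      have "card C' \<le> card C" unfolding C'_def using C(1) by (rule card_image_le)
      then show ?thesis using C(2) by linarith
    qed
    moreover have "\<forall>m. \<exists>c\<in>C'. \<forall>i<n. cmod (k * f (m + i) - c i) \<le> \<epsilon>"
    proof
      fix m
      obtain c where c: "c \<in> C" "\<forall>i<n. cmod (f (m + i) - c i) \<le> e" using C(3) by blast
      have "cmod (k * f (m + i) - k * c i) \<le> \<epsilon>" if i: "i < n" for i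
      proof -
        have "cmod (k * f (m + i) - k * c i) = cmod k * cmod (f (m + i) - c i)"
          by (simp add: right_diff_distrib[symmetric] norm_mult)
        also have "\<dots> \<le> cmod k * e" using c(2) i by (intro mult_left_mono) auto
        finally show ?thesis using ek by linarith
      qed
      moreover have "(\<lambda>i. k * c i) \<in> C'" unfolding C'_def using c(1) by blast
      ultimately show "\<exists>c\<in>C'. \<forall>i<n. cmod (k * f (m + i) - c i) \<le> \<epsilon>" by force
    qed
    ultimately show ?case by blast
  qed
qed



lemma subexp_det:
  assumes fin: "finite F" and sF: "\<And>q. q \<in> F \<Longrightarrow> subexp q" and \<delta>: "\<delta> > 0"
    and det: "\<And>m m'. (\<forall>q\<in>F. cmod (q m - q m') < \<delta>) \<Longrightarrow> p m = p m'"
  shows "subexp p"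
  unfolding subexp_def
proof (intro allI impI)
  fix \<epsilon> a :: real assume \<epsilon>: "\<epsilon> > 0" and a: "a > 0"
  define b where "b = a / (real (card F) + 1)"
  have b0: "b > 0" unfolding b_def using a by simp
  have bF: "real (card F) * b \<le> a" unfolding b_def using a by (simp add: field_simps)
  define e where "e = \<delta> / 3"
  have e0: "e > 0" unfolding e_def using \<delta> by simp
  have "eventually (\<lambda>n. \<forall>q\<in>F. \<exists>C. finite C \<and> real (card C) \<le> exp (b * real n) \<and>
       (\<forall>m. \<exists>c\<in>C. \<forall>i<n. cmod (q (m + i) - c i) \<le> e)) sequentially"
    using fin
  proof (rule eventually_ball_finite, intro ballI)
    fix q assume "q \<in> F"
    show "eventually (\<lambda>n. \<exists>C. finite C \<and> real (card C) \<le> exp (b * real n) \<and>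
       (\<forall>m. \<exists>c\<in>C. \<forall>i<n. cmod (q (m + i) - c i) \<le> e)) sequentially"
      using sF[OF \<open>q \<in> F\<close>, unfolded subexp_def, rule_format, OF e0 b0] .
  qed
  then show "eventually (\<lambda>n. \<exists>C. finite C \<and> real (card C) \<le> exp (a * real n) \<and>
       (\<forall>m. \<exists>c\<in>C. \<forall>i<n. cmod (p (m + i) - c i) \<le> \<epsilon>)) sequentially"
  proof eventually_elim
    case (elim n)
    obtain CC where CC: "\<forall>q\<in>F. finite (CC q) \<and> real (card (CC q)) \<le> exp (b * real n) \<and>
       (\<forall>m. \<exists>c\<in>CC q. \<forall>i<n. cmod (q (m + i) - c i) \<le> e)"
      by (rule exE[OF bchoice[OF elim]])
    define good where "good = (\<lambda>t m. \<forall>q\<in>F. \<forall>i<n. cmod (q (m + i) - t q i) \<le> e)"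
    define \<Phi> where "\<Phi> = (\<lambda>t. if (\<exists>m. good t m) then (\<lambda>i. p ((SOME m. good t m) + i)) else (\<lambda>i. 0))"
    define C where "C = \<Phi> ` (PiE F CC)"
    have finPi: "finite (PiE F CC)" using fin CC by (intro finite_PiE) auto
    have "finite C" unfolding C_def using finPi by simp
    moreover have "real (card C) \<le> exp (a * real n)"
    proof -
      have "card C \<le> card (PiE F CC)" unfolding C_def using finPi by (rule card_image_le)
      also have "\<dots> = (\<Prod>q\<in>F. card (CC q))" using fin by (rule card_PiE)
      finally have "real (card C) \<le> real (\<Prod>q\<in>F. card (CC q))" by (simp only: of_nat_le_iff)
      also have "\<dots> = (\<Prod>q\<in>F. real (card (CC q)))" by simp
      also have "\<dots> \<le> (\<Prod>q\<in>F. exp (b * real n))" using CC by (intro prod_mono) auto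
      also have "\<dots> = exp (b * real n) ^ card F" by simp
      also have "\<dots> = exp (real (card F) * (b * real n))" by (simp add: exp_of_nat_mult)
      also have "\<dots> \<le> exp (a * real n)" using bF by (intro exp_mono) (auto intro: mult_right_mono simp: mult.assoc[symmetric])
      finally show ?thesis .
    qed
    moreover have "\<forall>m. \<exists>c\<in>C. \<forall>i<n. cmod (p (m + i) - c i) \<le> \<epsilon>"
    proof
      fix m
      define t where "t = restrict (\<lambda>q. SOME c. c \<in> CC q \<and> (\<forall>i<n. cmod (q (m + i) - c i) \<le> e)) F"
      have tq: "t q \<in> CC q \<and> (\<forall>i<n. cmod (q (m + i) - t q i) \<le> e)" if "q \<in> F" for q
      proof -
        have ex: "\<exists>c. c \<in> CC q \<and> (\<forall>i<n. cmod (q (m + i) - c i) \<le> e)" using CC that by blast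
        have tv: "t q = (SOME c. c \<in> CC q \<and> (\<forall>i<n. cmod (q (m + i) - c i) \<le> e))" unfolding t_def using that by simp
        show ?thesis unfolding tv by (rule someI_ex[OF ex])
      qed
      have tPi: "t \<in> PiE F CC" using tq unfolding t_def by auto
      have gm: "good t m" unfolding good_def using tq by blast
      define m' where "m' = (SOME m. good t m)"
      have gm': "good t m'" unfolding m'_def using gm by (rule someI)
      have \<Phi>t: "\<Phi> t = (\<lambda>i. p (m' + i))" unfolding \<Phi>_def m'_def using gm by auto
      have "p (m + i) = p (m' + i)" if i: "i < n" for i
      proof (rule det, intro ballI)
        fix q assume q: "q \<in> F"
        have "cmod (q (m + i) - t q i) \<le> e" using gm q i unfolding good_def by blast
        moreover have "cmod (q (m' + i) - t q i) \<le> e" using gm' q i unfolding good_def by blast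
        moreover have "cmod (q (m + i) - q (m' + i)) \<le> cmod (q (m + i) - t q i) + cmod (q (m' + i) - t q i)"
          using norm_triangle_ineq4[of "q (m + i) - t q i" "q (m' + i) - t q i"] by simp
        ultimately show "cmod (q (m + i) - q (m' + i)) < \<delta>" unfolding e_def using \<delta> by linarith
      qed
      then have "\<forall>i<n. cmod (p (m + i) - \<Phi> t i) \<le> \<epsilon>" using \<epsilon> \<Phi>t by simp
      moreover have "\<Phi> t \<in> C" unfolding C_def using tPi by blast
      ultimately show "\<exists>c\<in>C. \<forall>i<n. cmod (p (m + i) - c i) \<le> \<epsilon>" by (intro bexI[of _ "\<Phi> t"])
    qed
    ultimately show ?case by (intro exI[of _ C]) simp
  qed
qed

lemma E0_linf: "f \<in> E0 \<Longrightarrow> f \<in> linf" unfolding E0_iff by simp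

lemma E0_const: "(\<lambda>_. c) \<in> E0"
  unfolding E0_iff using subexp_const[of c] anqie_const[OF linf_anqie, of c] by (intro conjI)

lemma E0_add: assumes f: "f \<in> E0" and g: "g \<in> E0" shows "(\<lambda>n. f n + g n) \<in> E0"
proof -
  have "f \<in> linf" "subexp f" "g \<in> linf" "subexp g" using f g unfolding E0_iff by auto
  then show ?thesis unfolding E0_iff by (intro conjI anqie_add[OF linf_anqie] subexp_add)
qed

lemma E0_mult: assumes f: "f \<in> E0" and g: "g \<in> E0" shows "(\<lambda>n. f n * g n) \<in> E0"
proof -
  have "f \<in> linf" "subexp f" "g \<in> linf" "subexp g" using f g unfolding E0_iff by auto
  then show ?thesis unfolding E0_iff by (intro conjI anqie_mult[OF linf_anqie] subexp_mult)
qed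

lemma E0_scal: assumes f: "f \<in> E0" shows "(\<lambda>n. c * f n) \<in> E0"
proof -
  have "f \<in> linf" "subexp f" using f unfolding E0_iff by auto
  then show ?thesis unfolding E0_iff by (intro conjI anqie_scal[OF linf_anqie] subexp_scal)
qed

lemma pt_E0: "pt E0 m \<in> characters E0"
  by (rule pt_char) (auto intro: E0_const E0_add E0_mult E0_scal)

lemma E0_bound: assumes \<rho>: "\<rho> \<in> characters E0" and d: "d \<in> E0" shows "cmod (\<rho> d) \<le> sup_norm d"
proof -
  have A: "is_anqie (anqie_gen d)" and B: "d \<in> anqie_gen d" using anqie_gen[OF E0_linf[OF d]] by auto
  show ?thesis by (rule char_bound[OF \<rho> A E0_hered[OF d] B])
qed

lemma E0_spec: assumes \<rho>: "\<rho> \<in> characters E0" and b: "b \<in> E0" and d: "d > 0" and bd: "\<And>m. d \<le> cmod (b m - c)"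
  shows "\<rho> b \<noteq> c"
proof -
  have A: "is_anqie (anqie_gen b)" and B: "b \<in> anqie_gen b" using anqie_gen[OF E0_linf[OF b]] by auto
  show ?thesis by (rule char_spec[OF \<rho> A E0_hered[OF b] B d bd])
qed

lemma E0_sub_const: assumes \<rho>: "\<rho> \<in> characters E0" and h: "h \<in> E0"
  shows "(\<lambda>n. h n - c) \<in> E0" "\<rho> (\<lambda>n. h n - c) = \<rho> h - c"
proof -
  have A: "is_anqie (anqie_gen h)" "h \<in> anqie_gen h" using anqie_gen[OF E0_linf[OF h]] by auto
  show "(\<lambda>n. h n - c) \<in> E0" using E0_hered[OF h] anqie_diff[OF A(1) A(2) anqie_const[OF A(1), of c]] by auto
  show "\<rho> (\<lambda>n. h n - c) = \<rho> h - c" by (rule char_sub_const[OF \<rho> A(1) E0_hered[OF h] A(2)])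
qed

section \<open>zero-dimensionality\<close>

lemma zerodim:
  assumes cpt: "compact_space X" and td: "totally_disconnected_top X" and V: "openin X V" and x: "x \<in> V"
  shows "\<exists>C. openin X C \<and> closedin X C \<and> x \<in> C \<and> C \<subseteq> V"
proof -
  have xt: "x \<in> topspace X" using V x openin_subset by blast
  define K where "K = topspace X - V"
  have "closedin X K" unfolding K_def by (rule closedin_diff[OF closedin_topspace V])
  then have cK: "compactin X K" using cpt closedin_compact_space by blast
  have exD: "\<forall>y\<in>K. \<exists>D. openin X D \<and> closedin X D \<and> x \<in> D \<and> y \<notin> D"
  proof
    fix y assume y: "y \<in> K"
    then have "y \<in> topspace X" "x \<noteq> y" using x unfolding K_def by auto
    then show "\<exists>D. openin X D \<and> closedin X D \<and> x \<in> D \<and> y \<notin> D"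
      using td xt unfolding totally_disconnected_top_def by blast
  qed
  obtain D where D0: "\<forall>y\<in>K. openin X (D y) \<and> closedin X (D y) \<and> x \<in> D y \<and> y \<notin> D y"
    by (rule exE[OF bchoice[OF exD]])
  have D: "openin X (D y) \<and> closedin X (D y) \<and> x \<in> D y \<and> y \<notin> D y" if "y \<in> K" for y
    using D0 that by blast
  define \<U> where "\<U> = (\<lambda>y. topspace X - D y) ` K"
  have op: "\<forall>U\<in>\<U>. openin X U" unfolding \<U>_def
  proof
    fix U assume "U \<in> (\<lambda>y. topspace X - D y) ` K"
    then obtain y where y: "y \<in> K" "U = topspace X - D y" by blast
    have "closedin X (D y)" using D[OF y(1)] by blast
    then show "openin X U" unfolding y(2) by (rule openin_diff[OF openin_topspace])
  qed
  have cov: "K \<subseteq> \<Union>\<U>"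
  proof
    fix y assume y: "y \<in> K"
    then have "y \<in> topspace X - D y" using D[OF y] unfolding K_def by blast
    then show "y \<in> \<Union>\<U>" unfolding \<U>_def using y by blast
  qed
  have "\<forall>\<U>. (\<forall>U\<in>\<U>. openin X U) \<and> K \<subseteq> \<Union>\<U> \<longrightarrow> (\<exists>\<F>. finite \<F> \<and> \<F> \<subseteq> \<U> \<and> K \<subseteq> \<Union>\<F>)"
    using cK unfolding compactin_def by (rule conjunct2)
  then have "\<exists>\<F>. finite \<F> \<and> \<F> \<subseteq> \<U> \<and> K \<subseteq> \<Union>\<F>" by (rule mp[OF spec[of _ \<U>]]) (use op cov in simp)
  then obtain \<F> where F: "finite \<F>" "\<F> \<subseteq> \<U>" "K \<subseteq> \<Union>\<F>" by blast
  have clF: "closedin X (\<Union>\<F>)"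
  proof (rule closedin_Union[OF F(1)])
    fix U assume "U \<in> \<F>"
    then obtain y where y: "y \<in> K" "U = topspace X - D y" using F(2) unfolding \<U>_def by blast
    have "openin X (D y)" using D[OF y(1)] by blast
    then show "closedin X U" unfolding y(2) by (rule closedin_diff[OF closedin_topspace])
  qed
  have opF: "openin X (\<Union>\<F>)"
  proof (rule openin_Union)
    fix U assume "U \<in> \<F>"
    then obtain y where y: "y \<in> K" "U = topspace X - D y" using F(2) unfolding \<U>_def by blast
    have "closedin X (D y)" using D[OF y(1)] by blast
    then show "openin X U" unfolding y(2) by (rule openin_diff[OF openin_topspace])
  qed
  have xF: "x \<notin> \<Union>\<F>"
  proof
    assume "x \<in> \<Union>\<F>"
    then obtain U where "U \<in> \<F>" "x \<in> U" by blast
    then obtain y where "y \<in> K" "x \<in> topspace X - D y" using F(2) unfolding \<U>_def by blast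
    then show False using D by blast
  qed
  show ?thesis
  proof (intro exI[of _ "topspace X - \<Union>\<F>"] conjI)
    show "openin X (topspace X - \<Union>\<F>)" by (rule openin_diff[OF openin_topspace clF])
    show "closedin X (topspace X - \<Union>\<F>)" by (rule closedin_diff[OF closedin_topspace opF])
    show "x \<in> topspace X - \<Union>\<F>" using xt xF by blast
    show "topspace X - \<Union>\<F> \<subseteq> V" using F(3) unfolding K_def by blast
  qed
qed



lemma F0_E0: "f \<in> F0 \<Longrightarrow> f \<in> E0"
  unfolding F0_def E0_def by auto

lemma td_of_eq:
  assumes eq: "E0 = norm_closure F0"
  shows "totally_disconnected_top (weakstar E0)"
  unfolding totally_disconnected_top_def topspace_weakstar
proof (intro ballI impI)
  fix \<rho>1 \<rho>2 assume \<rho>1: "\<rho>1 \<in> characters E0" and \<rho>2: "\<rho>2 \<in> characters E0" and ne: "\<rho>1 \<noteq> \<rho>2"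
  obtain g where g: "\<rho>1 g \<noteq> \<rho>2 g" using ne by auto
  have gE: "g \<in> E0" using g char_out[OF \<rho>1] char_out[OF \<rho>2] by metis
  define \<epsilon> where "\<epsilon> = cmod (\<rho>1 g - \<rho>2 g) / 3"
  have \<epsilon>: "\<epsilon> > 0" unfolding \<epsilon>_def using g by simp
  obtain h where hF: "h \<in> F0" and gh: "sup_norm (\<lambda>n. g n - h n) < \<epsilon>"
    using gE \<epsilon> unfolding eq norm_closure_def by blast
  have hE: "h \<in> E0" using F0_E0[OF hF] .
  have hfin: "finite (range h)" using hF unfolding F0_def by auto
  have close: "cmod (\<rho> g - \<rho> h) < \<epsilon>" if \<rho>: "\<rho> \<in> characters E0" for \<rho>
  proof -
    have mh: "(\<lambda>n. (-1) * h n) \<in> E0" by (rule E0_scal[OF hE])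
    have deq: "\<rho> (\<lambda>n. g n - h n) = \<rho> g - \<rho> h" by (rule char_diff[OF \<rho> gE hE mh])
    show ?thesis
    proof (cases "(\<lambda>n. g n - h n) \<in> E0")
      case True
      then have "cmod (\<rho> (\<lambda>n. g n - h n)) \<le> sup_norm (\<lambda>n. g n - h n)" by (rule E0_bound[OF \<rho>])
      then show ?thesis using deq gh by simp
    next
      case False
      then have "\<rho> (\<lambda>n. g n - h n) = 0" by (rule char_out[OF \<rho>])
      then show ?thesis using deq \<epsilon> by simp
    qed
  qed
  have hne: "\<rho>1 h \<noteq> \<rho>2 h"
  proof
    assume eqh: "\<rho>1 h = \<rho>2 h"
    have "\<rho>1 g - \<rho>2 g = (\<rho>1 g - \<rho>1 h) - (\<rho>2 g - \<rho>2 h)" using eqh by simp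
    then have "cmod (\<rho>1 g - \<rho>2 g) \<le> cmod (\<rho>1 g - \<rho>1 h) + cmod (\<rho>2 g - \<rho>2 h)"
      using norm_triangle_ineq4[of "\<rho>1 g - \<rho>1 h" "\<rho>2 g - \<rho>2 h"] by simp
    also have "\<dots> < 2 * \<epsilon>" using close[OF \<rho>1] close[OF \<rho>2] by simp
    finally show False unfolding \<epsilon>_def by simp
  qed
  define a where "a = \<rho>1 h"
  define \<delta>0 where "\<delta>0 = Min (insert 1 ((\<lambda>(x, y). cmod (x - y)) ` {(x, y). x \<in> range h \<and> y \<in> range h \<and> x \<noteq> y}))"
  have finP: "finite {(x, y). x \<in> range h \<and> y \<in> range h \<and> x \<noteq> y}"
    by (rule finite_subset[of _ "range h \<times> range h"]) (use hfin in auto)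
  have \<delta>0: "\<delta>0 > 0" unfolding \<delta>0_def using finP by (auto simp: Min_gr_iff)
  have \<delta>0le: "\<delta>0 \<le> 1" unfolding \<delta>0_def using finP by (intro Min_le) auto
  have sep: "\<delta>0 \<le> cmod (x - y)" if "x \<in> range h" "y \<in> range h" "x \<noteq> y" for x y
    unfolding \<delta>0_def using finP that by (intro Min_le) force+
  have arange: "a \<in> range h"
  proof (rule ccontr)
    assume na: "a \<notin> range h"
    define d where "d = Min ((\<lambda>x. cmod (x - a)) ` range h)"
    have d: "d > 0" unfolding d_def using hfin na by (auto simp: Min_gr_iff)
    have "\<rho>1 h \<noteq> a"
    proof (rule E0_spec[OF \<rho>1 hE d])
      fix m show "d \<le> cmod (h m - a)" unfolding d_def using hfin by (intro Min_le) auto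
    qed
    then show False unfolding a_def by simp
  qed
  define p where "p = (\<lambda>n. if h n = a then (1::complex) else 0)"
  have pE: "p \<in> E0" unfolding E0_iff
  proof
    show "p \<in> linf" unfolding linf_iff p_def by (intro exI[of _ 1]) auto
    have sh: "subexp h" using hE unfolding E0_iff by simp
    show "subexp p"
    proof (rule subexp_det[of "{h}" \<delta>0])
      fix m m' assume "\<forall>q\<in>{h}. cmod (q m - q m') < \<delta>0"
      then have "cmod (h m - h m') < \<delta>0" by simp
      then have "h m = h m'" using sep[of "h m" "h m'"] by force
      then show "p m = p m'" unfolding p_def by simp
    qed (use sh \<delta>0 in auto)
  qed
  have idem: "\<rho> p = 0 \<or> \<rho> p = 1" if \<rho>: "\<rho> \<in> characters E0" for \<rho>
  proof -
    have "(\<lambda>n. p n * p n) = p" unfolding p_def by auto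
    then have "\<rho> p = \<rho> p * \<rho> p" using char_mult[OF \<rho> pE pE] by simp
    then have "\<rho> p * (\<rho> p - 1) = 0" by (simp add: algebra_simps)
    then show ?thesis by simp
  qed
  have hmaE: "(\<lambda>n. h n - a) \<in> E0" by (rule E0_sub_const(1)[OF \<rho>1 hE])
  have p1: "\<rho>1 p = 1"
  proof -
    define b where "b = (\<lambda>n. (\<lambda>n. h n - a) n + p n)"
    have bE: "b \<in> E0" unfolding b_def by (rule E0_add[OF hmaE pE])
    have rb: "\<rho>1 b = (\<rho>1 h - a) + \<rho>1 p"
      unfolding b_def using char_add[OF \<rho>1 hmaE pE] E0_sub_const(2)[OF \<rho>1 hE] by simp
    have "\<rho>1 b \<noteq> 0"
    proof (rule E0_spec[OF \<rho>1 bE \<delta>0])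
      fix m
      show "\<delta>0 \<le> cmod (b m - 0)"
      proof (cases "h m = a")
        case True then show ?thesis unfolding b_def p_def using \<delta>0le by simp
      next
        case False
        then have "\<delta>0 \<le> cmod (h m - a)" using sep[of "h m" a] arange by auto
        then show ?thesis unfolding b_def p_def using False by simp
      qed
    qed
    then have "\<rho>1 p \<noteq> 0" using rb unfolding a_def by simp
    then show ?thesis using idem[OF \<rho>1] by simp
  qed
  have p2: "\<rho>2 p = 0"
  proof -
    have z: "(\<lambda>n. (\<lambda>n. h n - a) n * p n) = (\<lambda>_. 0)" unfolding p_def by auto
    have "\<rho>2 (\<lambda>n. (\<lambda>n. h n - a) n * p n) = \<rho>2 (\<lambda>n. h n - a) * \<rho>2 p"
      by (rule char_mult[OF \<rho>2 hmaE pE])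
    moreover have "\<rho>2 (\<lambda>_. 0) = 0" using char_const[OF \<rho>2 E0_const] by simp
    ultimately have "(\<rho>2 h - a) * \<rho>2 p = 0" using z E0_sub_const(2)[OF \<rho>2 hE] by simp
    moreover have "\<rho>2 h - a \<noteq> 0" using hne unfolding a_def by simp
    ultimately show ?thesis by simp
  qed
  define C where "C = {\<rho> \<in> characters E0. \<rho> p = 1}"
  show "\<exists>C. openin (weakstar E0) C \<and> closedin (weakstar E0) C \<and> \<rho>1 \<in> C \<and> \<rho>2 \<notin> C"
  proof (intro exI[of _ C] conjI)
    have "openin (weakstar E0) {\<rho> \<in> topspace (weakstar E0). \<rho> p \<in> ball 1 (1/2)}"
      by (rule openin_continuous_map_preimage[OF cont_proj]) (simp flip: open_openin)
    moreover have "{\<rho> \<in> topspace (weakstar E0). \<rho> p \<in> ball 1 (1/2)} = C"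
      unfolding C_def topspace_weakstar dist_norm by (auto dest: idem)
    ultimately show "openin (weakstar E0) C" by simp
    have "closedin (weakstar E0) {\<rho> \<in> topspace (weakstar E0). \<rho> p \<in> {1}}"
      by (rule closedin_continuous_map_preimage[OF cont_proj]) (simp flip: closed_closedin)
    moreover have "{\<rho> \<in> topspace (weakstar E0). \<rho> p \<in> {1}} = C"
      unfolding C_def topspace_weakstar by auto
    ultimately show "closedin (weakstar E0) C" by simp
    show "\<rho>1 \<in> C" unfolding C_def using \<rho>1 p1 by simp
    show "\<rho>2 \<notin> C" unfolding C_def using p2 by simp
  qed
qed



lemma openin_fin_Int:
  assumes "finite S" "\<And>r. r \<in> S \<Longrightarrow> openin X (G r)"
  shows "openin X (topspace X \<inter> \<Inter>(G ` S))"
  using assms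
proof (induction S rule: finite_induct)
  case empty then show ?case by simp
next
  case (insert a S)
  have ih: "openin X (topspace X \<inter> \<Inter>(G ` S))" using insert.IH insert.prems by blast
  have ga: "openin X (G a)" using insert.prems by blast
  have "openin X (G a \<inter> (topspace X \<inter> \<Inter>(G ` S)))" by (rule openin_Int[OF ga ih])
  moreover have "G a \<inter> (topspace X \<inter> \<Inter>(G ` S)) = topspace X \<inter> \<Inter>(G ` insert a S)"
    using openin_subset[OF insert.prems[of a]] by auto
  ultimately show ?case by simp
qed

lemma eq_of_td:
  assumes td: "totally_disconnected_top (weakstar E0)"
  shows "E0 = norm_closure F0"
proof (intro equalityI subsetI)
  fix f assume f: "f \<in> norm_closure F0"
  then have fl: "f \<in> linf" and ap: "\<forall>e>0. \<exists>g\<in>F0. sup_norm (\<lambda>n. f n - g n) < e"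
    unfolding norm_closure_def by auto
  have "subexp f"
  proof (rule subexp_approx[OF fl])
    fix e :: real assume "e > 0"
    then obtain g where g: "g \<in> F0" "sup_norm (\<lambda>n. f n - g n) < e" using ap by blast
    then have "g \<in> linf" "subexp g" using F0_E0[OF g(1)] unfolding E0_iff by auto
    then show "\<exists>g. g \<in> linf \<and> subexp g \<and> sup_norm (\<lambda>n. f n - g n) < e" using g(2) by blast
  qed
  then show "f \<in> E0" using fl E0_iff by blast
next
  fix g assume gE: "g \<in> E0"
  have gl: "g \<in> linf" by (rule E0_linf[OF gE])
  let ?X = "weakstar E0"
  have cpt: "compact_space ?X" by (rule compact_chars[OF hered_E0])
  have "\<forall>e>0. \<exists>h\<in>F0. sup_norm (\<lambda>n. g n - h n) < e"
  proof (intro allI impI)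
    fix e :: real assume e: "e > 0"
    define V where "V = (\<lambda>\<rho>. {\<sigma> \<in> characters E0. cmod (\<sigma> g - \<rho> g) < e/4})"
    have Vop: "openin ?X (V \<rho>)" for \<rho>
    proof -
      have "openin ?X {\<tau> \<in> characters E0. \<forall>q\<in>{g}. cmod (\<tau> q - (\<lambda>_. \<rho> g) q) < e/4}"
        by (rule open_basic) simp
      then show ?thesis unfolding V_def by simp
    qed
    have exC: "\<forall>\<rho>\<in>characters E0. \<exists>C. openin ?X C \<and> closedin ?X C \<and> \<rho> \<in> C \<and> C \<subseteq> V \<rho>"
    proof
      fix \<rho> assume \<rho>: "\<rho> \<in> characters E0"
      have "\<rho> \<in> V \<rho>" unfolding V_def using \<rho> e by simp
      then show "\<exists>C. openin ?X C \<and> closedin ?X C \<and> \<rho> \<in> C \<and> C \<subseteq> V \<rho>"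
        by (rule zerodim[OF cpt td Vop])
    qed
    obtain Cl where Cl: "\<forall>\<rho>\<in>characters E0. openin ?X (Cl \<rho>) \<and> closedin ?X (Cl \<rho>) \<and> \<rho> \<in> Cl \<rho> \<and> Cl \<rho> \<subseteq> V \<rho>"
      by (rule exE[OF bchoice[OF exC]])
    have o1: "\<forall>U\<in>Cl ` characters E0. openin ?X U" using Cl by blast
    have o2: "topspace ?X \<subseteq> \<Union>(Cl ` characters E0)" using Cl by auto
    have "\<forall>\<U>. (\<forall>U\<in>\<U>. openin ?X U) \<and> topspace ?X \<subseteq> \<Union>\<U> \<longrightarrow> (\<exists>\<F>. finite \<F> \<and> \<F> \<subseteq> \<U> \<and> topspace ?X \<subseteq> \<Union>\<F>)"
      using cpt unfolding compact_space_alt .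
    then have "\<exists>\<F>. finite \<F> \<and> \<F> \<subseteq> Cl ` characters E0 \<and> topspace ?X \<subseteq> \<Union>\<F>"
      by (rule mp[OF spec[of _ "Cl ` characters E0"]]) (use o1 o2 in simp)
    then obtain \<F> where F: "finite \<F>" "\<F> \<subseteq> Cl ` characters E0" "characters E0 \<subseteq> \<Union>\<F>" by auto
    obtain S where S: "finite S" "S \<subseteq> characters E0" "\<F> = Cl ` S"
      using F(1,2) by (meson finite_subset_image)
    have covS: "characters E0 \<subseteq> \<Union>(Cl ` S)" using F(3) S(3) by simp
    define ty where "ty = (\<lambda>\<sigma>. {\<rho> \<in> S. \<sigma> \<in> Cl \<rho>})"
    define D where "D = (\<lambda>T. {\<sigma> \<in> characters E0. ty \<sigma> = T})"
    have Dop: "openin ?X (D T)" if T: "T \<subseteq> S" for T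
    proof -
      define G where "G = (\<lambda>\<rho>. if \<rho> \<in> T then Cl \<rho> else topspace ?X - Cl \<rho>)"
      have "openin ?X (topspace ?X \<inter> \<Inter>(G ` S))"
      proof (rule openin_fin_Int[OF S(1)])
        fix \<rho> assume "\<rho> \<in> S"
        then have "openin ?X (Cl \<rho>)" "closedin ?X (Cl \<rho>)" using Cl S(2) by auto
        then show "openin ?X (G \<rho>)" unfolding G_def
          using openin_diff[OF openin_topspace \<open>closedin ?X (Cl \<rho>)\<close>] by auto
      qed
      moreover have "topspace ?X \<inter> \<Inter>(G ` S) = D T"
        unfolding D_def ty_def G_def using T by auto
      ultimately show ?thesis by simp
    qed
    define \<D> where "\<D> = D ` Pow S"
    obtain F r where Fr: "finite F" "F \<subseteq> E0" "r > 0"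
      "\<forall>\<sigma>\<in>characters E0. \<exists>U\<in>\<D>. \<forall>\<tau>\<in>characters E0. (\<forall>q\<in>F. cmod (\<tau> q - \<sigma> q) < r) \<longrightarrow> \<tau> \<in> U"
    proof -
      have opD: "\<And>U. U \<in> \<D> \<Longrightarrow> openin ?X U" unfolding \<D>_def using Dop by auto
      have covD: "characters E0 \<subseteq> \<Union>\<D>"
      proof
        fix \<sigma> assume "\<sigma> \<in> characters E0"
        then have "\<sigma> \<in> D (ty \<sigma>)" "ty \<sigma> \<in> Pow S" unfolding D_def ty_def by auto
        then show "\<sigma> \<in> \<Union>\<D>" unfolding \<D>_def by blast
      qed
      have ex: "\<exists>F r. finite F \<and> F \<subseteq> E0 \<and> r > 0 \<and>
        (\<forall>\<sigma>\<in>characters E0. \<exists>U\<in>\<D>. \<forall>\<tau>\<in>characters E0. (\<forall>q\<in>F. cmod (\<tau> q - \<sigma> q) < r) \<longrightarrow> \<tau> \<in> U)"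
        by (rule lebesgue[OF cpt]) (use opD covD in auto)
      from ex show ?thesis by (elim exE conjE) (rule that)
    qed
    define val where "val = (\<lambda>T :: (seq \<Rightarrow> complex) set. (SOME \<rho>. \<rho> \<in> T) g :: complex)"
    define h where "h = (\<lambda>m. val (ty (pt E0 m)))"
    have ptv: "pt E0 m q = q m" if "q \<in> E0" for m q unfolding pt_def using that by simp
    have hm: "cmod (g m - h m) < e/4" for m
    proof -
      have "pt E0 m \<in> characters E0" by (rule pt_E0)
      then have "ty (pt E0 m) \<noteq> {}" using covS unfolding ty_def by auto
      then have \<rho>m: "(SOME \<rho>. \<rho> \<in> ty (pt E0 m)) \<in> ty (pt E0 m)" by (simp add: some_in_eq)
      define \<rho> where "\<rho> = (SOME \<rho>. \<rho> \<in> ty (pt E0 m))"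
      have "\<rho> \<in> S" "pt E0 m \<in> Cl \<rho>" using \<rho>m unfolding \<rho>_def ty_def by auto
      then have "pt E0 m \<in> V \<rho>" using Cl S(2) by blast
      then have "cmod (pt E0 m g - \<rho> g) < e/4" unfolding V_def by simp
      then show ?thesis unfolding h_def val_def \<rho>_def[symmetric] ptv[OF gE] by simp
    qed
    have finr: "finite (range h)"
    proof (rule finite_subset)
      show "range h \<subseteq> val ` Pow S" unfolding h_def ty_def by auto
      show "finite (val ` Pow S)" using S(1) by simp
    qed
    have hl: "h \<in> linf" unfolding linf_def using finite_imp_bounded[OF finr] by simp
    have hs: "subexp h"
    proof (rule subexp_det[OF Fr(1) _ Fr(3)])
      fix q assume "q \<in> F" then show "subexp q" using Fr(2) E0_iff by blast
    next
      fix m m' assume cl: "\<forall>q\<in>F. cmod (q m - q m') < r"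
      obtain U where U: "U \<in> \<D>" "\<forall>\<tau>\<in>characters E0. (\<forall>q\<in>F. cmod (\<tau> q - pt E0 m q) < r) \<longrightarrow> \<tau> \<in> U"
        using Fr(4) pt_E0[of m] by blast
      obtain T where T: "T \<subseteq> S" "U = D T" using U(1) unfolding \<D>_def by auto
      have "pt E0 m \<in> U" using U(2) pt_E0[of m] Fr(3) by simp
      then have t1: "ty (pt E0 m) = T" using T(2) unfolding D_def by simp
      have "\<forall>q\<in>F. cmod (pt E0 m' q - pt E0 m q) < r"
        using cl Fr(2) ptv by (auto simp: norm_minus_commute)
      then have "pt E0 m' \<in> U" using U(2) pt_E0[of m'] by blast
      then have t2: "ty (pt E0 m') = T" using T(2) unfolding D_def by simp
      show "h m = h m'" unfolding h_def using t1 t2 by simp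
    qed
    have hE: "h \<in> E0" using hl hs E0_iff by blast
    have hF: "h \<in> F0" using hE finr unfolding E0_def F0_def by auto
    have "sup_norm (\<lambda>n. g n - h n) \<le> e/4" by (rule sup_norm_le) (use hm in \<open>simp add: less_imp_le\<close>)
    then have "sup_norm (\<lambda>n. g n - h n) < e" using e by linarith
    then show "\<exists>h\<in>F0. sup_norm (\<lambda>n. g n - h n) < e" using hF by blast
  qed
  then show "g \<in> norm_closure F0" unfolding norm_closure_def using gl by blast
qed

theorem proposition5p7:
  shows "totally_disconnected_top (weakstar E0) \<longleftrightarrow> E0 = norm_closure F0"
  using td_of_eq eq_of_td by blast

end
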